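(* Let $p\ge1$, $d=2^p$, and for each $l\in[p]$ let $\mathbf h_l\in\mathbb C^{2\times2}$ be Hermitian with $\mathbf h_l^2=\mathbf I$, and $\mathbf m_l\in\mathbb C^{2\times 2}$ Hermitian such that both $\mathbf m_l+\mathbf h_l\mathbf m_l\mathbf h_l$ and $\mathbf m_l-\mathbf h_l\mathbf m_l\mathbf h_l$ are nonzero. Let $\mathbf H_l=\mathbf I\otimes\cdots\otimes\mathbf I\otimes\mathbf h_l\otimes\mathbf I\otimes\cdots\otimes\mathbf I$ ($\mathbf h_l$ in the $l$-th tensor factor) and $\mathbf M=\mathbf m_1\otimes\cdots\otimes\mathbf m_p$. Then the QNN $(\mathbf H_1,\dots,\mathbf H_p;\mathbf M)$ is with linear independence, and there exists a dataset $\mathcal S$ whose loss $L(\cdot;\mathcal S)$ has, within one period $[0,\pi)^p$, $2^p-1$ spurious local minima (local minima whose values exceed the global minimum value by a positive amount).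
   Context: A $p$-parameter QNN on a $d$-dimensional system is given by Hermitian $\mathbf H_1,\dots,\mathbf H_p$ and Hermitian observable $\mathbf M$; $\mathbf U(\boldsymbol\theta)=e^{-i\theta_p\mathbf H_p}\cdots e^{-i\theta_1\mathbf H_1}$. A dataset is a finite set $\mathcal S=\{(\boldsymbol\rho_i,y_i)\}_{i=1}^m$ of density matrices (PSD, trace 1) and real labels, with loss $L(\boldsymbol\theta;\mathcal S)=\frac1m\sum_i\big(\operatorname{tr}(\mathbf U(\boldsymbol\theta)\boldsymbol\rho_i\mathbf U(\boldsymbol\theta)^\dagger\mathbf M)-y_i\big)^2$. Define $\Phi_l^{(0)}(\mathbf A)=\frac12(\mathbf A+\mathbf H_l\mathbf A\mathbf H_l)$, $\Phi_l^{(1)}(\mathbf A)=\frac12(\mathbf A-\mathbf H_l\mathbf A\mathbf H_l)$, $\Phi_l^{(2)}(\mathbf A)=\frac i2[\mathbf H_l,\mathbf A]$, $\Phi_{\boldsymbol\xi}=\Phi_1^{(\xi_1)}\circ\cdots\circ\Phi_p^{(\xi_p)}$. The QNN is with linear independence if $\{\Phi_{\boldsymbol\xi}(\mathbf M)\}_{\boldsymbol\xi\in\{0,1,2\}^p\setminus\{\mathbf 0\}}$ is linearly independent. *)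

theory Defs
  imports "HOL-Analysis.Analysis" "Jordan_Normal_Form.Matrix"
begin

definition adj :: "complex mat \<Rightarrow> complex mat" where
  "adj A = mat (dim_col A) (dim_row A) (\<lambda>(i,j). cnj (A $$ (j,i)))"

definition hermitian :: "complex mat \<Rightarrow> bool" where
  "hermitian A \<longleftrightarrow> A \<in> carrier_mat (dim_row A) (dim_row A) \<and> adj A = A"

definition mtrace :: "complex mat \<Rightarrow> complex" where
  "mtrace A = (\<Sum>i<dim_row A. A $$ (i,i))"

definition psd :: "complex mat \<Rightarrow> bool" where
  "psd A \<longleftrightarrow> hermitian A \<and>
     (\<forall>v :: nat \<Rightarrow> complex. 0 \<le> Re (\<Sum>i<dim_row A. \<Sum>j<dim_row A. cnj (v i) * A $$ (i,j) * v j))"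

definition density_matrix :: "nat \<Rightarrow> complex mat \<Rightarrow> bool" where
  "density_matrix d \<rho> \<longleftrightarrow> \<rho> \<in> carrier_mat d d \<and> psd \<rho> \<and> mtrace \<rho> = 1"

definition mat_exp :: "complex mat \<Rightarrow> complex mat" where
  "mat_exp A = mat (dim_row A) (dim_row A) (\<lambda>(i,j). \<Sum>k. (A ^\<^sub>m k) $$ (i,j) / of_nat (fact k))"

definition kron :: "complex mat \<Rightarrow> complex mat \<Rightarrow> complex mat" where
  "kron A B = mat (dim_row A * dim_row B) (dim_col A * dim_col B)
     (\<lambda>(i,j). A $$ (i div dim_row B, j div dim_col B) * B $$ (i mod dim_row B, j mod dim_col B))"

primrec kron_upto :: "(nat \<Rightarrow> complex mat) \<Rightarrow> nat \<Rightarrow> complex mat" where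
  "kron_upto m 0 = 1\<^sub>m 1"
| "kron_upto m (Suc l) = kron (kron_upto m l) (m (Suc l))"

text \<open>\<open>H_l = I \<otimes> ... \<otimes> h_l \<otimes> ... \<otimes> I\<close> on p qubits, h_l in the l-th factor (1-based).\<close>
definition local_op :: "nat \<Rightarrow> (nat \<Rightarrow> complex mat) \<Rightarrow> nat \<Rightarrow> complex mat" where
  "local_op p h l = kron (kron (1\<^sub>m (2 ^ (l - 1))) (h l)) (1\<^sub>m (2 ^ (p - l)))"

section \<open>QNNs: a QNN is (p, H_1..H_p, M); H indexed 1..p, parameters theta indexed 1..p\<close>

primrec qnn_U :: "nat \<Rightarrow> (nat \<Rightarrow> complex mat) \<Rightarrow> (nat \<Rightarrow> real) \<Rightarrow> nat \<Rightarrow> complex mat" where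
  "qnn_U d H \<theta> 0 = 1\<^sub>m d"
| "qnn_U d H \<theta> (Suc l) = mat_exp ((- \<i> * complex_of_real (\<theta> (Suc l))) \<cdot>\<^sub>m H (Suc l)) * qnn_U d H \<theta> l"

definition qnn_loss :: "nat \<Rightarrow> (nat \<Rightarrow> complex mat) \<Rightarrow> complex mat \<Rightarrow> (complex mat \<times> real) set
    \<Rightarrow> (nat \<Rightarrow> real) \<Rightarrow> real" where
  "qnn_loss p H M S \<theta> =
     (let U = qnn_U (dim_row M) H \<theta> p in
      (1 / real (card S)) * (\<Sum>(\<rho>, y)\<in>S. (Re (mtrace (U * \<rho> * adj U * M)) - y)\<^sup>2))"

definition dataset :: "nat \<Rightarrow> (complex mat \<times> real) set \<Rightarrow> bool" where
  "dataset d S \<longleftrightarrow> finite S \<and> S \<noteq> {} \<and> (\<forall>(\<rho>, y)\<in>S. density_matrix d \<rho>)"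

definition Phi :: "complex mat \<Rightarrow> nat \<Rightarrow> complex mat \<Rightarrow> complex mat" where
  "Phi H x A =
     (if x = 0 then (1/2) \<cdot>\<^sub>m (A + H * A * H)
      else if x = 1 then (1/2) \<cdot>\<^sub>m (A - H * A * H)
      else (\<i>/2) \<cdot>\<^sub>m (H * A - A * H))"

primrec Phi_seq :: "(nat \<Rightarrow> complex mat) \<Rightarrow> (nat \<Rightarrow> nat) \<Rightarrow> nat \<Rightarrow> complex mat \<Rightarrow> complex mat" where
  "Phi_seq H \<xi> 0 A = A"
| "Phi_seq H \<xi> (Suc l) A = Phi_seq H \<xi> l (Phi (H (Suc l)) (\<xi> (Suc l)) A)"

text \<open>Index set \<open>{0,1,2}^p \ {0}\<close>, as functions on 1..p that vanish elsewhere.\<close>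
definition xi_set :: "nat \<Rightarrow> (nat \<Rightarrow> nat) set" where
  "xi_set p = {\<xi>. (\<forall>l\<in>{1..p}. \<xi> l \<le> 2) \<and> (\<forall>l. l \<notin> {1..p} \<longrightarrow> \<xi> l = 0)} - {(\<lambda>_. 0)}"

definition with_linear_independence :: "nat \<Rightarrow> (nat \<Rightarrow> complex mat) \<Rightarrow> complex mat \<Rightarrow> bool" where
  "with_linear_independence p H M \<longleftrightarrow>
     (\<forall>c :: (nat \<Rightarrow> nat) \<Rightarrow> real.
        (\<forall>i<dim_row M. \<forall>j<dim_col M.
           (\<Sum>\<xi>\<in>xi_set p. complex_of_real (c \<xi>) * Phi_seq H \<xi> p M $$ (i,j)) = 0)
        \<longrightarrow> (\<forall>\<xi>\<in>xi_set p. c \<xi> = 0))"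

definition local_min_param :: "nat \<Rightarrow> ((nat \<Rightarrow> real) \<Rightarrow> real) \<Rightarrow> (nat \<Rightarrow> real) \<Rightarrow> bool" where
  "local_min_param p L \<theta> \<longleftrightarrow>
     (\<exists>\<epsilon>>0. \<forall>\<theta>'. (\<forall>l\<in>{1..p}. \<bar>\<theta>' l - \<theta> l\<bar> < \<epsilon>) \<longrightarrow> L \<theta> \<le> L \<theta>')"

definition spurious_local_min :: "nat \<Rightarrow> ((nat \<Rightarrow> real) \<Rightarrow> real) \<Rightarrow> (nat \<Rightarrow> real) \<Rightarrow> bool" where
  "spurious_local_min p L \<theta> \<longleftrightarrow> local_min_param p L \<theta> \<and> L \<theta> > (INF \<theta>'. L \<theta>')"

text \<open>One period \<open>[0,pi)^p\<close>; coordinates outside 1..p fixed to 0 so points are genuinely in R^p.\<close>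
definition period_box :: "nat \<Rightarrow> (nat \<Rightarrow> real) set" where
  "period_box p = {\<theta>. (\<forall>l\<in>{1..p}. 0 \<le> \<theta> l \<and> \<theta> l < pi) \<and> (\<forall>l. l \<notin> {1..p} \<longrightarrow> \<theta> l = 0)}"

end

theory Submission
  imports Defs
begin

lemma sum_lessThan_mult:
  fixes a b :: nat
  shows "(\<Sum>r<a*b. f r) = (\<Sum>s<a. \<Sum>t<b. f (s*b + t)::'a::comm_monoid_add)"
proof (induction a)
  case 0 then show ?case by simp
next
  case (Suc a)
  have "{..<Suc a * b} = {..<a*b} \<union> {a*b..<a*b+b}" by auto
  moreover have "(\<Sum>r\<in>{a*b..<a*b+b}. f r) = (\<Sum>t<b. f (a*b+t))"
  proof -
    have "{a*b..<a*b+b} = (\<lambda>t. a*b+t) ` {..<b}" 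
    proof (auto simp: image_iff)
      fix x assume "a*b \<le> x" "x < a*b+b"
      then show "\<exists>t\<in>{..<b}. x = a*b+t" by (intro bexI[of _ "x - a*b"]) auto
    qed
    then show ?thesis by (simp add: sum.reindex)
  qed
  ultimately show ?case using Suc
  proof -
    assume e: "{..<Suc a * b} = {..<a * b} \<union> {a * b..<a * b + b}"
      and e2: "sum f {a * b..<a * b + b} = (\<Sum>t<b. f (a * b + t))"
    have "sum f {..<Suc a * b} = sum f {..<a * b} + sum f {a * b..<a * b + b}"
      unfolding e by (rule sum.union_disjoint) auto
    then show ?thesis using Suc e2 by simp
  qed
qed

lemma sum_lessThan_mult_divmod:
  fixes a b :: nat
  assumes "b > 0"
  shows "(\<Sum>r<a*b. f (r div b) (r mod b)) = (\<Sum>s<a. \<Sum>t<b. f s t::'a::comm_monoid_add)"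
proof -
  have "(\<Sum>r<a*b. f (r div b) (r mod b)) = (\<Sum>s<a. \<Sum>t<b. f ((s*b+t) div b) ((s*b+t) mod b))"
    by (rule sum_lessThan_mult)
  also have "\<dots> = (\<Sum>s<a. \<Sum>t<b. f s t)"
    using assms by (intro sum.cong refl) auto
  finally show ?thesis .
qed

lemma kron_dim[simp]:
  "dim_row (kron A B) = dim_row A * dim_row B" "dim_col (kron A B) = dim_col A * dim_col B"
  by (auto simp: kron_def)

lemma kron_carrier[simp, intro]:
  "A \<in> carrier_mat ra ca \<Longrightarrow> B \<in> carrier_mat rb cb \<Longrightarrow> kron A B \<in> carrier_mat (ra*rb) (ca*cb)"
  unfolding carrier_mat_def by simp

lemma kron_index:
  "i < dim_row A * dim_row B \<Longrightarrow> j < dim_col A * dim_col B \<Longrightarrow>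
   kron A B $$ (i,j) = A $$ (i div dim_row B, j div dim_col B) * B $$ (i mod dim_row B, j mod dim_col B)"
  by (simp add: kron_def)

lemma div_less_mult: "i < a * (b::nat) \<Longrightarrow> i div b < a"
  by (simp add: less_mult_imp_div_less)

lemma mod_less_mult: "i < a * (b::nat) \<Longrightarrow> i mod b < b"
  by (cases "b = 0") auto

lemma mult_index_sum:
  assumes "i < dim_row A" "j < dim_col B" "dim_col A = dim_row B"
  shows "(A * B) $$ (i,j) = (\<Sum>k<dim_row B. A $$ (i,k) * B $$ (k,j))"
  using assms by (simp add: scalar_prod_def lessThan_atLeast0)

lemma kron_mult:
  fixes A C B D :: "complex mat"
  assumes A: "A \<in> carrier_mat na nb" and C: "C \<in> carrier_mat nb nc"
    and B: "B \<in> carrier_mat ka kb" and D: "D \<in> carrier_mat kb kc"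
  shows "kron A B * kron C D = kron (A * C) (B * D)"
proof (rule eq_matI)
  fix i j assume i: "i < dim_row (kron (A * C) (B * D))" and j: "j < dim_col (kron (A * C) (B * D))"
  have i': "i < na * ka" and j': "j < nc * kc" using i j A B C D by auto
  then have ka: "ka > 0" and kc: "kc > 0" by (auto intro!: Nat.gr0I)
  have "(kron A B * kron C D) $$ (i,j) = (\<Sum>r<nb*kb. kron A B $$ (i,r) * kron C D $$ (r,j))"
    using A B C D i' j' by (subst mult_index_sum) auto
  also have "\<dots> = (\<Sum>r<nb*kb. (A $$ (i div ka, r div kb) * C $$ (r div kb, j div kc)) *
          (B $$ (i mod ka, r mod kb) * D $$ (r mod kb, j mod kc)))"
    using A B C D i' j' by (intro sum.cong refl) (auto simp: kron_index mult.assoc mult.left_commute)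
  also have "\<dots> = (\<Sum>s<nb. \<Sum>t<kb. (A $$ (i div ka, s) * C $$ (s, j div kc)) *
          (B $$ (i mod ka, t) * D $$ (t, j mod kc)))"
  proof (cases "kb = 0")
    case True then show ?thesis by simp
  next
    case False then show ?thesis
      by (subst sum_lessThan_mult_divmod[where f = "\<lambda>s t. (A $$ (i div ka, s) * C $$ (s, j div kc)) *
          (B $$ (i mod ka, t) * D $$ (t, j mod kc))"]) auto
  qed
  also have "\<dots> = (A * C) $$ (i div ka, j div kc) * (B * D) $$ (i mod ka, j mod kc)"
  proof -
    have "(A * C) $$ (i div ka, j div kc) = (\<Sum>s<nb. A $$ (i div ka, s) * C $$ (s, j div kc))"
      using A C i' j' by (subst mult_index_sum) (auto simp: div_less_mult)
    moreover have "(B * D) $$ (i mod ka, j mod kc) = (\<Sum>t<kb. B $$ (i mod ka, t) * D $$ (t, j mod kc))"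
      using B D i' j' by (subst mult_index_sum) (auto simp: mod_less_mult)
    ultimately show ?thesis by (simp add: sum_product)
  qed
  also have "\<dots> = kron (A * C) (B * D) $$ (i,j)"
    using A B C D i' j' by (simp add: kron_index)
  finally show "(kron A B * kron C D) $$ (i,j) = kron (A * C) (B * D) $$ (i,j)" .
qed (use assms in auto)

lemma kron_add_left:
  assumes "A \<in> carrier_mat ra ca" "A' \<in> carrier_mat ra ca"
  shows "kron (A + A') B = kron A B + kron A' B"
  using assms by (intro eq_matI) (auto simp: kron_index div_less_mult algebra_simps)

lemma kron_add_right:
  assumes "B \<in> carrier_mat rb cb" "B' \<in> carrier_mat rb cb"
  shows "kron A (B + B') = kron A B + kron A B'"
  using assms by (intro eq_matI) (auto simp: kron_index mod_less_mult algebra_simps)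

lemma kron_minus_left:
  assumes "A \<in> carrier_mat ra ca" "A' \<in> carrier_mat ra ca"
  shows "kron (A - A') B = kron A B - kron A' B"
  using assms by (intro eq_matI) (auto simp: kron_index div_less_mult algebra_simps)

lemma kron_minus_right:
  assumes "B \<in> carrier_mat rb cb" "B' \<in> carrier_mat rb cb"
  shows "kron A (B - B') = kron A B - kron A B'"
  using assms by (intro eq_matI) (auto simp: kron_index mod_less_mult algebra_simps)

lemma kron_smult_left: "kron (c \<cdot>\<^sub>m A) B = c \<cdot>\<^sub>m kron A B"
  by (intro eq_matI) (auto simp: kron_index div_less_mult algebra_simps)

lemma kron_smult_right: "kron A (c \<cdot>\<^sub>m B) = c \<cdot>\<^sub>m kron A B"
  by (intro eq_matI) (auto simp: kron_index mod_less_mult algebra_simps)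

lemma kron_assoc: "kron (kron A B) C = kron A (kron B C)"
proof (rule eq_matI)
  fix i j assume i: "i < dim_row (kron A (kron B C))" and j: "j < dim_col (kron A (kron B C))"
  define ra rb rc ca cb cc where "ra = dim_row A" "rb = dim_row B" "rc = dim_row C"
    "ca = dim_col A" "cb = dim_col B" "cc = dim_col C"
  have i': "i < ra * rb * rc" and j': "j < ca * cb * cc" using i j by (auto simp: ra_rb_rc_ca_cb_cc_def mult.assoc)
  then have pos: "rb > 0" "rc > 0" "cb > 0" "cc > 0" by (auto intro!: Nat.gr0I)
  have ra: "i div rc < ra * rb" "j div cc < ca * cb" using i' j' by (auto simp: div_less_mult)
  have ca: "i mod (rb * rc) < rb * rc" "j mod (cb*cc) < cb * cc" using pos by auto
  have e1: "i div rc div rb = i div (rb * rc)" "j div cc div cb = j div (cb * cc)"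
    by (metis div_mult2_eq mult.commute)+
  have m1: "i mod (rb * rc) = rc * (i div rc mod rb) + i mod rc" "j mod (cb * cc) = cc * (j div cc mod cb) + j mod cc"
    by (metis mod_mult2_eq mult.commute)+
  have e2: "i div rc mod rb = i mod (rb * rc) div rc" "j div cc mod cb = j mod (cb * cc) div cc"
    unfolding m1 using pos by simp_all
  have e3: "i mod (rb * rc) mod rc = i mod rc" "j mod (cb * cc) mod cc = j mod cc"
    unfolding m1 using pos by simp_all
  have "kron (kron A B) C $$ (i,j) = A $$ (i div rc div rb, j div cc div cb) * B $$ (i div rc mod rb, j div cc mod cb) * C $$ (i mod rc, j mod cc)"
    using i' j' ra by (simp add: kron_index ra_rb_rc_ca_cb_cc_def mult.assoc)
  also have "\<dots> = A $$ (i div (rb*rc), j div (cb*cc)) * (B $$ (i mod (rb*rc) div rc, j mod (cb*cc) div cc) * C $$ (i mod (rb*rc) mod rc, j mod (cb*cc) mod cc))"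
    by (simp only: e1 e2 e3 mult.assoc)
  also have "\<dots> = kron A (kron B C) $$ (i,j)"
    using i' j' ca by (simp add: kron_index ra_rb_rc_ca_cb_cc_def mult.assoc)
  finally show "kron (kron A B) C $$ (i,j) = kron A (kron B C) $$ (i,j)" .
qed (auto simp: mult.assoc)

lemma kron_one: "kron (1\<^sub>m a) (1\<^sub>m b) = 1\<^sub>m (a * b)"
proof (rule eq_matI)
  fix i j assume "i < dim_row (1\<^sub>m (a * b))" "j < dim_col (1\<^sub>m (a * b))"
  then have ij: "i < a * b" "j < a * b" by auto
  then have "b > 0" by (auto intro!: Nat.gr0I)
  have "(i div b = j div b \<and> i mod b = j mod b) = (i = j)"
    by (metis div_mult_mod_eq)
  then show "kron (1\<^sub>m a) (1\<^sub>m b) $$ (i, j) = 1\<^sub>m (a * b) $$ (i, j)"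
    using ij `b > 0` by (auto simp: kron_index div_less_mult)
qed auto

lemma kron_one_1_right: "kron A (1\<^sub>m 1) = A"
  by (intro eq_matI) (auto simp: kron_index)

lemma kron_one_1_left: "kron (1\<^sub>m 1) A = A"
  by (intro eq_matI) (auto simp: kron_index)

lemma kron_trace:
  assumes A: "A \<in> carrier_mat a a" and B: "B \<in> carrier_mat b b"
  shows "mtrace (kron A B) = mtrace A * mtrace B"
proof (cases "b = 0")
  case True then show ?thesis using A B by (simp add: mtrace_def)
next
  case False
  have "mtrace (kron A B) = (\<Sum>r<a*b. A $$ (r div b, r div b) * B $$ (r mod b, r mod b))"
    using A B by (auto simp: mtrace_def kron_index intro!: sum.cong)
  also have "\<dots> = (\<Sum>s<a. \<Sum>t<b. A $$ (s, s) * B $$ (t, t))"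
    using False by (subst sum_lessThan_mult_divmod[where f = "\<lambda>s t. A $$ (s, s) * B $$ (t, t)"]) auto
  also have "\<dots> = mtrace A * mtrace B"
    using A B by (simp add: mtrace_def sum_product)
  finally show ?thesis .
qed

lemma adj_dim[simp]: "dim_row (adj A) = dim_col A" "dim_col (adj A) = dim_row A"
  by (auto simp: adj_def)

lemma adj_index[simp]: "i < dim_col A \<Longrightarrow> j < dim_row A \<Longrightarrow> adj A $$ (i,j) = cnj (A $$ (j,i))"
  by (simp add: adj_def)

lemma adj_carrier[simp]: "A \<in> carrier_mat n k \<Longrightarrow> adj A \<in> carrier_mat k n"
  unfolding carrier_mat_def by simp

lemma kron_adj: "adj (kron A B) = kron (adj A) (adj B)"
  by (intro eq_matI) (auto simp: kron_index div_less_mult mod_less_mult)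

declare index_mult_mat(1)[simp del]

lemma adj_mult:
  assumes "A \<in> carrier_mat n k" "B \<in> carrier_mat k l"
  shows "adj (A * B) = adj B * adj A"
  using assms by (intro eq_matI) (auto simp: mult_index_sum sum_distrib_left mult.commute)

lemma adj_add: "A \<in> carrier_mat n k \<Longrightarrow> B \<in> carrier_mat n k \<Longrightarrow> adj (A + B) = adj A + adj B"
  by (intro eq_matI) auto

lemma adj_minus: "A \<in> carrier_mat n k \<Longrightarrow> B \<in> carrier_mat n k \<Longrightarrow> adj (A - B) = adj A - adj B"
  by (intro eq_matI) auto

lemma adj_smult: "adj (c \<cdot>\<^sub>m A) = cnj c \<cdot>\<^sub>m adj A"
  by (intro eq_matI) auto

lemma adj_adj: "adj (adj A) = A"
  by (intro eq_matI) auto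

lemma adj_one: "adj (1\<^sub>m n) = 1\<^sub>m n"
  by (intro eq_matI) auto

lemma adj_zero: "adj (0\<^sub>m n k) = 0\<^sub>m k n"
  by (intro eq_matI) auto

lemma hermitian_iff: "A \<in> carrier_mat n n \<Longrightarrow> hermitian A \<longleftrightarrow> adj A = A"
  by (auto simp: hermitian_def)

lemma trace_comm:
  assumes A: "A \<in> carrier_mat n k" and B: "B \<in> carrier_mat k n"
  shows "mtrace (A * B) = mtrace (B * A)"
proof -
  have "mtrace (A * B) = (\<Sum>i<n. \<Sum>j<k. A $$ (i,j) * B $$ (j,i))"
    using A B by (auto simp: mtrace_def mult_index_sum)
  also have "\<dots> = (\<Sum>j<k. \<Sum>i<n. B $$ (j,i) * A $$ (i,j))"
    by (subst sum.swap) (simp add: mult.commute)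
  also have "\<dots> = mtrace (B * A)"
    using A B by (auto simp: mtrace_def mult_index_sum)
  finally show ?thesis .
qed

lemma trace_add: "A \<in> carrier_mat n n \<Longrightarrow> B \<in> carrier_mat n n \<Longrightarrow> mtrace (A + B) = mtrace A + mtrace B"
  by (simp add: mtrace_def sum.distrib)

lemma trace_minus: "A \<in> carrier_mat n n \<Longrightarrow> B \<in> carrier_mat n n \<Longrightarrow> mtrace (A - B) = mtrace A - mtrace B"
  by (simp add: mtrace_def sum_subtractf)

lemma trace_smult: "A \<in> carrier_mat n n \<Longrightarrow> mtrace (c \<cdot>\<^sub>m A) = c * mtrace A"
  by (simp add: mtrace_def sum_distrib_left)

lemma trace_one: "mtrace (1\<^sub>m n) = of_nat n"
  by (simp add: mtrace_def)

lemma trace_zero: "mtrace (0\<^sub>m n n) = 0"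
  by (simp add: mtrace_def)

lemma trace_adj: "A \<in> carrier_mat n n \<Longrightarrow> mtrace (adj A) = cnj (mtrace A)"
  by (simp add: mtrace_def)

lemma trace_herm_real:
  assumes A: "A \<in> carrier_mat n n" and B: "B \<in> carrier_mat n n"
    and hA: "adj A = A" and hB: "adj B = B"
  shows "cnj (mtrace (A * B)) = mtrace (A * B)"
proof -
  have "cnj (mtrace (A * B)) = mtrace (adj (A * B))" using A B by (subst trace_adj[of _ n]) auto
  also have "\<dots> = mtrace (B * A)" using A B hA hB by (simp add: adj_mult)
  also have "\<dots> = mtrace (A * B)" using A B by (simp add: trace_comm)
  finally show ?thesis .
qed

lemma cnj_eq_real: assumes "cnj z = z" shows "z = complex_of_real (Re z)"
proof -
  have "Im z = 0" using arg_cong[OF assms, of Im] by simp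
  then show ?thesis by (simp add: complex_eq_iff)
qed

lemma mult_cnj_cmod: "z * cnj z = complex_of_real ((cmod z)\<^sup>2)"
  by (simp add: complex_mult_cnj cmod_power2)

lemma trace_self_adj:
  assumes A: "A \<in> carrier_mat n k"
  shows "mtrace (A * adj A) = complex_of_real (\<Sum>i<n. \<Sum>j<k. (cmod (A $$ (i,j)))\<^sup>2)"
proof -
  have "mtrace (A * adj A) = (\<Sum>i<n. \<Sum>j<k. A $$ (i,j) * cnj (A $$ (i,j)))"
    using A by (auto simp: mtrace_def mult_index_sum)
  also have "\<dots> = (\<Sum>i<n. \<Sum>j<k. complex_of_real ((cmod (A $$ (i,j)))\<^sup>2))"
    by (simp add: mult_cnj_cmod)
  finally show ?thesis by simp
qed

lemma trace_self_adj_nz: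
  assumes A: "A \<in> carrier_mat n k" and nz: "A \<noteq> 0\<^sub>m n k"
  shows "Re (mtrace (A * adj A)) > 0"
proof -
  obtain i j where ij: "i < n" "j < k" "A $$ (i,j) \<noteq> 0"
    using nz A by (metis carrier_matD(1) carrier_matD(2) eq_matI index_zero_mat(1) index_zero_mat(2) index_zero_mat(3))
  have "(\<Sum>i<n. \<Sum>j<k. (cmod (A $$ (i,j)))\<^sup>2) \<ge> (\<Sum>j<k. (cmod (A $$ (i,j)))\<^sup>2)"
    using ij by (intro member_le_sum) (auto intro: sum_nonneg)
  moreover have "(\<Sum>j<k. (cmod (A $$ (i,j)))\<^sup>2) \<ge> (cmod (A $$ (i,j)))\<^sup>2"
    using ij by (intro member_le_sum) auto
  moreover have "(cmod (A $$ (i,j)))\<^sup>2 > 0" using ij by simp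
  ultimately have "(\<Sum>i<n. \<Sum>j<k. (cmod (A $$ (i,j)))\<^sup>2) > 0" by linarith
  then show ?thesis using A by (simp add: trace_self_adj)
qed

lemma psd_mult_adj:
  assumes X: "X \<in> carrier_mat n k"
  shows "psd (X * adj X)"
proof -
  have herm: "hermitian (X * adj X)"
    using X by (auto simp: hermitian_def adj_mult[of X n k "adj X" n] adj_adj)
  have "0 \<le> Re (\<Sum>i<n. \<Sum>j<n. cnj (v i) * (X * adj X) $$ (i,j) * v j)" for v :: "nat \<Rightarrow> complex"
  proof -
    have "(\<Sum>i<n. \<Sum>j<n. cnj (v i) * (X * adj X) $$ (i,j) * v j)
        = (\<Sum>i<n. \<Sum>j<n. \<Sum>r<k. cnj (v i) * X $$ (i,r) * (cnj (X $$ (j,r)) * v j))"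
      using X by (intro sum.cong refl) (auto simp: mult_index_sum sum_distrib_left sum_distrib_right mult_ac)
    also have "\<dots> = (\<Sum>r<k. (\<Sum>i<n. cnj (v i) * X $$ (i,r)) * cnj (\<Sum>j<n. cnj (v j) * X $$ (j,r)))"
      by (simp add: sum_product sum_distrib_left sum_distrib_right mult_ac)
         (subst sum.swap, rule sum.cong, simp, subst sum.swap, simp)
    also have "\<dots> = (\<Sum>r<k. complex_of_real ((cmod (\<Sum>i<n. cnj (v i) * X $$ (i,r)))\<^sup>2))"
      by (simp only: mult_cnj_cmod)
    finally show ?thesis by (simp add: sum_nonneg)
  qed
  then show ?thesis using herm X by (simp add: psd_def)
qed

definition fam2 :: "(nat \<Rightarrow> complex mat) \<Rightarrow> nat \<Rightarrow> bool" where
  "fam2 X n \<longleftrightarrow> (\<forall>j\<in>{1..n}. X j \<in> carrier_mat 2 2)"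

lemma fam2_Suc: "fam2 X (Suc n) \<Longrightarrow> fam2 X n \<and> X (Suc n) \<in> carrier_mat 2 2"
  by (auto simp: fam2_def)

lemma ku_carrier: "fam2 X n \<Longrightarrow> kron_upto X n \<in> carrier_mat (2^n) (2^n)"
proof (induction n)
  case 0 then show ?case by simp
next
  case (Suc n)
  then have "kron (kron_upto X n) (X (Suc n)) \<in> carrier_mat (2^n*2) (2^n*2)"
    using fam2_Suc[OF Suc.prems] by (intro kron_carrier) auto
  then show ?case by (simp add: mult.commute)
qed

lemma ku_cong: "(\<forall>j\<in>{1..n}. X j = Y j) \<Longrightarrow> kron_upto X n = kron_upto Y n"
  by (induction n) auto

lemma ku_mult:
  "fam2 X n \<Longrightarrow> fam2 Y n \<Longrightarrow> kron_upto X n * kron_upto Y n = kron_upto (\<lambda>j. X j * Y j) n"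
proof (induction n)
  case 0 then show ?case by simp
next
  case (Suc n)
  have c: "X (Suc n) \<in> carrier_mat 2 2" "Y (Suc n) \<in> carrier_mat 2 2" "fam2 X n" "fam2 Y n"
    using fam2_Suc[OF Suc.prems(1)] fam2_Suc[OF Suc.prems(2)] by auto
  then show ?case
    using Suc.IH ku_carrier[OF c(3)] ku_carrier[OF c(4)] by (simp add: kron_mult[where kb = 2 and nb = "2^n"])
qed

lemma ku_adj: "adj (kron_upto X n) = kron_upto (\<lambda>j. adj (X j)) n"
  by (induction n) (auto simp: kron_adj adj_one)

lemma ku_trace: "fam2 X n \<Longrightarrow> mtrace (kron_upto X n) = (\<Prod>j=1..n. mtrace (X j))"
proof (induction n)
  case 0 then show ?case by (simp add: mtrace_def)
next
  case (Suc n)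
  have c: "X (Suc n) \<in> carrier_mat 2 2" "fam2 X n" using fam2_Suc[OF Suc.prems] by auto
  then show ?case using Suc.IH ku_carrier[OF c(2)]
    by (simp add: kron_trace[where a = "2^n" and b = 2] prod.nat_ivl_Suc' mult.commute)
qed

lemma ku_one: "(\<forall>j\<in>{1..n}. X j = 1\<^sub>m 2) \<Longrightarrow> kron_upto X n = 1\<^sub>m (2^n)"
  by (induction n) (auto simp: kron_one mult.commute)

lemma ku_split: "kron_upto X (l + k) = kron (kron_upto X l) (kron_upto (\<lambda>j. X (l+j)) k)"
  by (induction k) (auto simp: kron_one_1_right kron_one_1_right[unfolded One_nat_def] kron_assoc)

lemma ku_slot:
  assumes "1 \<le> l" "l \<le> n"
  shows "kron_upto (X(l:=Z)) n = kron (kron (kron_upto X (l-1)) Z) (kron_upto (\<lambda>j. X (l+j)) (n-l))"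
proof -
  have "kron_upto (X(l:=Z)) n = kron_upto (X(l:=Z)) (l + (n-l))" using assms by simp
  also have "\<dots> = kron (kron_upto (X(l:=Z)) l) (kron_upto (\<lambda>j. (X(l:=Z)) (l+j)) (n-l))"
    by (rule ku_split)
  also have "kron_upto (\<lambda>j. (X(l:=Z)) (l+j)) (n-l) = kron_upto (\<lambda>j. X (l+j)) (n-l)"
    by (rule ku_cong) auto
  also have "kron_upto (X(l:=Z)) l = kron (kron_upto (X(l:=Z)) (l-1)) Z"
    using assms by (cases l) auto
  also have "kron_upto (X(l:=Z)) (l-1) = kron_upto X (l-1)"
    using assms by (intro ku_cong) auto
  finally show ?thesis .
qed

lemma ku_slot': "1 \<le> l \<Longrightarrow> l \<le> n \<Longrightarrow> kron_upto X n = kron (kron (kron_upto X (l-1)) (X l)) (kron_upto (\<lambda>j. X (l+j)) (n-l))"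
  using ku_slot[of l n X "X l"] by simp

lemma fam2_shift: "fam2 X n \<Longrightarrow> 1 \<le> l \<Longrightarrow> l \<le> n \<Longrightarrow> fam2 X (l-1) \<and> fam2 (\<lambda>j. X (l+j)) (n-l) \<and> X l \<in> carrier_mat 2 2"
  by (auto simp: fam2_def)

lemma slot_mult_left:
  assumes L: "L \<in> carrier_mat a a" and R: "R \<in> carrier_mat r r" and h: "h \<in> carrier_mat 2 2" and Y: "Y \<in> carrier_mat 2 2"
  shows "kron (kron (1\<^sub>m a) h) (1\<^sub>m r) * kron (kron L Y) R = kron (kron L (h * Y)) R"
proof -
  have "kron (kron (1\<^sub>m a) h) (1\<^sub>m r) * kron (kron L Y) R = kron (kron (1\<^sub>m a) h * kron L Y) (1\<^sub>m r * R)"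
    using L R h Y by (intro kron_mult[where nb = "a*2" and kb = r]) auto
  also have "kron (1\<^sub>m a) h * kron L Y = kron (1\<^sub>m a * L) (h * Y)"
    using L R h Y by (intro kron_mult[where nb = "a" and kb = 2]) auto
  finally show ?thesis using L R by simp
qed

lemma slot_mult_right:
  assumes L: "L \<in> carrier_mat a a" and R: "R \<in> carrier_mat r r" and h: "h \<in> carrier_mat 2 2" and Y: "Y \<in> carrier_mat 2 2"
  shows "kron (kron L Y) R * kron (kron (1\<^sub>m a) h) (1\<^sub>m r) = kron (kron L (Y * h)) R"
proof -
  have "kron (kron L Y) R * kron (kron (1\<^sub>m a) h) (1\<^sub>m r) = kron (kron L Y * kron (1\<^sub>m a) h) (R * 1\<^sub>m r)"
    using L R h Y by (intro kron_mult[where nb = "a*2" and kb = r]) auto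
  also have "kron L Y * kron (1\<^sub>m a) h = kron (L * 1\<^sub>m a) (Y * h)"
    using L R h Y by (intro kron_mult[where nb = "a" and kb = 2]) auto
  finally show ?thesis using L R by simp
qed

lemma slot_add:
  assumes L: "L \<in> carrier_mat a a" and R: "R \<in> carrier_mat r r" and Y: "Y \<in> carrier_mat 2 2" and Z: "Z \<in> carrier_mat 2 2"
  shows "kron (kron L Y) R + kron (kron L Z) R = kron (kron L (Y + Z)) R"
  using assms by (simp add: kron_add_left[where ra = "a*2" and ca = "a*2"] kron_add_right[where rb = 2 and cb = 2])

lemma slot_minus:
  assumes L: "L \<in> carrier_mat a a" and R: "R \<in> carrier_mat r r" and Y: "Y \<in> carrier_mat 2 2" and Z: "Z \<in> carrier_mat 2 2"
  shows "kron (kron L Y) R - kron (kron L Z) R = kron (kron L (Y - Z)) R"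
  using assms by (simp add: kron_minus_left[where ra = "a*2" and ca = "a*2"] kron_minus_right[where rb = 2 and cb = 2])

lemma slot_smult: "c \<cdot>\<^sub>m kron (kron L Y) R = kron (kron L (c \<cdot>\<^sub>m Y)) R"
  by (simp add: kron_smult_left kron_smult_right)

lemma Phi_carrier: "H \<in> carrier_mat n n \<Longrightarrow> A \<in> carrier_mat n n \<Longrightarrow> Phi H x A \<in> carrier_mat n n"
  by (auto simp: Phi_def)

lemma slot_Phi:
  assumes L: "L \<in> carrier_mat a a" and R: "R \<in> carrier_mat r r" and h: "h \<in> carrier_mat 2 2" and Y: "Y \<in> carrier_mat 2 2"
  shows "Phi (kron (kron (1\<^sub>m a) h) (1\<^sub>m r)) x (kron (kron L Y) R) = kron (kron L (Phi h x Y)) R"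
proof -
  let ?H = "kron (kron (1\<^sub>m a) h) (1\<^sub>m r)"
  have HAH: "kron (kron L (h * Y)) R * ?H = kron (kron L (h * Y * h)) R"
    using assms by (simp add: slot_mult_right)
  have HA: "?H * kron (kron L Y) R = kron (kron L (h * Y)) R" and AH: "kron (kron L Y) R * ?H = kron (kron L (Y * h)) R"
    using assms by (simp_all add: slot_mult_left slot_mult_right)
  show ?thesis
    unfolding Phi_def HA AH HAH using assms
    by (simp add: slot_add slot_minus slot_smult)
qed

lemma local_op_def': "local_op p h l = kron (kron (1\<^sub>m (2^(l-1))) (h l)) (1\<^sub>m (2^(p-l)))"
  by (simp add: local_op_def)

lemma local_op_carrier: "1 \<le> l \<Longrightarrow> l \<le> p \<Longrightarrow> h l \<in> carrier_mat 2 2 \<Longrightarrow> local_op p h l \<in> carrier_mat (2^p) (2^p)"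
proof -
  assume a: "1 \<le> l" "l \<le> p" "h l \<in> carrier_mat 2 2"
  have "(2::nat)^(l-1) * 2 * 2^(p-l) = 2^p"
    using a by (metis One_nat_def Suc_pred le_add_diff_inverse less_eq_Suc_le power_Suc2 power_add)
  then show ?thesis using a unfolding local_op_def by (metis kron_carrier one_carrier_mat)
qed

lemma Phi_local:
  assumes "1 \<le> l" "l \<le> p" "fam2 X p" "h l \<in> carrier_mat 2 2"
  shows "Phi (local_op p h l) x (kron_upto X p) = kron_upto (X(l := Phi (h l) x (X l))) p"
proof -
  have f: "fam2 X (l-1)" "fam2 (\<lambda>j. X (l+j)) (p-l)" "X l \<in> carrier_mat 2 2"
    using fam2_shift[OF assms(3,1,2)] by auto
  have "Phi (local_op p h l) x (kron_upto X p) = Phi (local_op p h l) x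
     (kron (kron (kron_upto X (l-1)) (X l)) (kron_upto (\<lambda>j. X (l+j)) (p-l)))"
    using assms by (simp only: ku_slot'[symmetric])
  also have "\<dots> = kron (kron (kron_upto X (l-1)) (Phi (h l) x (X l))) (kron_upto (\<lambda>j. X (l+j)) (p-l))"
    unfolding local_op_def' using f assms ku_carrier[OF f(1)] ku_carrier[OF f(2)] by (intro slot_Phi) auto
  also have "\<dots> = kron_upto (X(l := Phi (h l) x (X l))) p"
    using assms by (simp only: ku_slot)
  finally show ?thesis .
qed

locale sqn = fixes n :: nat
begin
lemma cm_mult[simp]: "(X::complex mat) \<in> carrier_mat n n \<Longrightarrow> (Y::complex mat) \<in> carrier_mat n n \<Longrightarrow> X * (Y::complex mat) \<in> carrier_mat n n"
  by auto
lemma cm_add[simp]: "(X::complex mat) \<in> carrier_mat n n \<Longrightarrow> (Y::complex mat) \<in> carrier_mat n n \<Longrightarrow> X + (Y::complex mat) \<in> carrier_mat n n"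
  by auto
lemma cm_minus[simp]: "(X::complex mat) \<in> carrier_mat n n \<Longrightarrow> (Y::complex mat) \<in> carrier_mat n n \<Longrightarrow> X - (Y::complex mat) \<in> carrier_mat n n"
  by auto
lemma cm_uminus[simp]: "(X::complex mat) \<in> carrier_mat n n \<Longrightarrow> - (X::complex mat) \<in> carrier_mat n n"
  by auto
lemma cm_adj[simp]: "(X::complex mat) \<in> carrier_mat n n \<Longrightarrow> adj (X::complex mat) \<in> carrier_mat n n"
  by auto
lemma m_assoc[simp]: "(X::complex mat) \<in> carrier_mat n n \<Longrightarrow> (Y::complex mat) \<in> carrier_mat n n \<Longrightarrow> (Z::complex mat) \<in> carrier_mat n n \<Longrightarrow> X * Y * Z = X * (Y * Z)"
  by (rule assoc_mult_mat) auto
lemma m_dist[simp]: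
  "(X::complex mat) \<in> carrier_mat n n \<Longrightarrow> (Y::complex mat) \<in> carrier_mat n n \<Longrightarrow> (Z::complex mat) \<in> carrier_mat n n \<Longrightarrow> X * (Y + Z) = X * Y + X * Z"
  "(X::complex mat) \<in> carrier_mat n n \<Longrightarrow> (Y::complex mat) \<in> carrier_mat n n \<Longrightarrow> (Z::complex mat) \<in> carrier_mat n n \<Longrightarrow> (X + Y) * Z = X * Z + Y * Z"
  "(X::complex mat) \<in> carrier_mat n n \<Longrightarrow> (Y::complex mat) \<in> carrier_mat n n \<Longrightarrow> (Z::complex mat) \<in> carrier_mat n n \<Longrightarrow> X * (Y - Z) = X * Y - X * Z"
  "(X::complex mat) \<in> carrier_mat n n \<Longrightarrow> (Y::complex mat) \<in> carrier_mat n n \<Longrightarrow> (Z::complex mat) \<in> carrier_mat n n \<Longrightarrow> (X - Y) * Z = X * Z - Y * Z"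
  "(X::complex mat) \<in> carrier_mat n n \<Longrightarrow> (Y::complex mat) \<in> carrier_mat n n \<Longrightarrow> X * (c \<cdot>\<^sub>m Y) = c \<cdot>\<^sub>m (X * Y)"
  "(X::complex mat) \<in> carrier_mat n n \<Longrightarrow> (Y::complex mat) \<in> carrier_mat n n \<Longrightarrow> (c \<cdot>\<^sub>m X) * Y = c \<cdot>\<^sub>m (X * Y)"
  by (auto simp: mult_add_distrib_mat[where nr = n and nc = n and n = n] add_mult_distrib_mat[where nr = n and nc = n and n = n]
    mult_minus_distrib_mat[where nr = n and nc = n and n = n] minus_mult_distrib_mat[where nr = n and nc = n and n = n]
        mult_smult_distrib[where nr = n and nc = n and n = n] mult_smult_assoc_mat[where nr = n and nc = n and n = n])
lemma m_one1[simp]: "(X::complex mat) \<in> carrier_mat n n \<Longrightarrow> 1\<^sub>m n * X = X"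
  by auto
lemma m_one2[simp]: "(X::complex mat) \<in> carrier_mat n n \<Longrightarrow> X * 1\<^sub>m n = X"
  by auto
lemma m_eqI: "(X::complex mat) \<in> carrier_mat n n \<Longrightarrow> (Y::complex mat) \<in> carrier_mat n n \<Longrightarrow> (\<And>i j. i < n \<Longrightarrow> j < n \<Longrightarrow> X $$ (i,j) = Y $$ (i,j)) \<Longrightarrow> X = Y"
  by (intro eq_matI) auto
lemma tr_simps:
  "(X::complex mat) \<in> carrier_mat n n \<Longrightarrow> (Y::complex mat) \<in> carrier_mat n n \<Longrightarrow> mtrace (X + Y) = mtrace X + mtrace Y"
  "(X::complex mat) \<in> carrier_mat n n \<Longrightarrow> (Y::complex mat) \<in> carrier_mat n n \<Longrightarrow> mtrace (X - Y) = mtrace X - mtrace Y"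
  "(X::complex mat) \<in> carrier_mat n n \<Longrightarrow> mtrace (c \<cdot>\<^sub>m X) = c * mtrace X"
  "(X::complex mat) \<in> carrier_mat n n \<Longrightarrow> mtrace (- X) = - mtrace X"
  by (auto simp: trace_add trace_minus trace_smult) (simp add: mtrace_def sum_negf)
lemma tr_comm: "(X::complex mat) \<in> carrier_mat n n \<Longrightarrow> (Y::complex mat) \<in> carrier_mat n n \<Longrightarrow> mtrace (X * Y) = mtrace (Y * X)"
  by (rule trace_comm) auto
lemma adj_simps:
  "(X::complex mat) \<in> carrier_mat n n \<Longrightarrow> (Y::complex mat) \<in> carrier_mat n n \<Longrightarrow> adj (X * Y) = adj Y * adj X"
  "(X::complex mat) \<in> carrier_mat n n \<Longrightarrow> (Y::complex mat) \<in> carrier_mat n n \<Longrightarrow> adj (X + Y) = adj X + adj Y"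
  "(X::complex mat) \<in> carrier_mat n n \<Longrightarrow> (Y::complex mat) \<in> carrier_mat n n \<Longrightarrow> adj (X - Y) = adj X - adj Y"
  "adj (c \<cdot>\<^sub>m (X::complex mat)) = cnj c \<cdot>\<^sub>m adj X"
  by (auto simp: adj_mult adj_add adj_minus adj_smult)
end

locale qb = sqn +
  fixes h m :: "complex mat"
  assumes hc[simp]: "h \<in> carrier_mat n n" and mc[simp]: "m \<in> carrier_mat n n"
    and hh[simp]: "h * h = 1\<^sub>m n" and hadj[simp]: "adj h = h" and madj[simp]: "adj m = m"
begin

lemma dims[simp]: "dim_row h = n" "dim_col h = n" "dim_row m = n" "dim_col m = n"
  using hc mc by blast+

lemma hhX[simp]: "X \<in> carrier_mat n n \<Longrightarrow> h * (h * X) = X"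
  by (subst m_assoc[symmetric]) auto

definition "a = Phi h 0 m"
definition "b = Phi h 1 m"
definition "c = Phi h 2 m"

lemma a_def': "a = (1/2) \<cdot>\<^sub>m (m + h * (m * h))" by (simp add: a_def Phi_def)
lemma b_def': "b = (1/2) \<cdot>\<^sub>m (m - h * (m * h))" by (simp add: b_def Phi_def)
lemma c_def': "c = (\<i>/2) \<cdot>\<^sub>m (h * m - m * h)" by (simp add: c_def Phi_def)

lemma abc_carrier[simp]: "a \<in> carrier_mat n n" "b \<in> carrier_mat n n" "c \<in> carrier_mat n n"
  by (auto simp: a_def' b_def' c_def')

lemma abc_dims[simp]: "dim_row a = n" "dim_col a = n" "dim_row b = n" "dim_col b = n" "dim_row c = n" "dim_col c = n"
  using abc_carrier by blast+

lemma ha: "h * a = a * h"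
  unfolding a_def' by (simp, rule m_eqI, auto simp: algebra_simps)

lemma hb: "h * b = - (b * h)"
  unfolding b_def' by (simp, rule m_eqI, auto simp: algebra_simps)

lemma c_hb: "c = \<i> \<cdot>\<^sub>m (h * b)"
  unfolding b_def' c_def' by (simp, rule m_eqI, auto simp: algebra_simps)

lemma tr_anti: assumes X: "X \<in> carrier_mat n n" and e: "h * (X * h) = - X" shows "mtrace X = 0"
proof -
  have "mtrace X = mtrace (h * (h * X))" using X by simp
  also have "\<dots> = mtrace ((h * X) * h)" by (rule tr_comm[of h "h*X"]) (use X in auto)
  also have "\<dots> = mtrace (- X)" using X e by simp
  also have "\<dots> = - mtrace X" using X by (simp add: tr_simps)
  finally show ?thesis by simp
qed

lemma tr_ab: "mtrace (a * b) = 0"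
  by (rule tr_anti) (auto simp: a_def' b_def', rule m_eqI, auto simp: algebra_simps)

lemma tr_ac: "mtrace (a * c) = 0"
  by (rule tr_anti) (auto simp: a_def' c_def', rule m_eqI, auto simp: algebra_simps)

lemma tr_bc: "mtrace (b * c) = 0"
proof -
  have e: "h * b * b = - (b * (h * b))"
    by (simp add: b_def', rule m_eqI, auto simp: algebra_simps)
  have "mtrace (b * (h * b)) = mtrace ((h * b) * b)" by (rule tr_comm) auto
  also have "\<dots> = - mtrace (b * (h * b))" unfolding e by (simp add: tr_simps)
  finally have "mtrace (b * (h * b)) = 0" by simp
  then show ?thesis unfolding c_hb by (simp add: tr_simps)
qed

lemma herm_abc: "adj a = a" "adj b = b" "adj c = c"
  by (auto simp: a_def' b_def' c_def' adj_simps, (rule m_eqI, auto simp: algebra_simps)+)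

lemma tr_sq_pos: "X \<in> carrier_mat n n \<Longrightarrow> adj X = X \<Longrightarrow> X \<noteq> 0\<^sub>m n n \<Longrightarrow> mtrace (X * X) \<noteq> 0"
  using trace_self_adj_nz[of X n n] by auto

lemma c_nz: assumes "b \<noteq> 0\<^sub>m n n" shows "c \<noteq> 0\<^sub>m n n"
proof
  assume "c = 0\<^sub>m n n"
  then have "h * c = 0\<^sub>m n n" by simp
  moreover have "h * c = \<i> \<cdot>\<^sub>m b" unfolding c_hb by simp
  ultimately have "(-\<i>) \<cdot>\<^sub>m (\<i> \<cdot>\<^sub>m b) = 0\<^sub>m n n" by simp
  moreover have "(-\<i>) \<cdot>\<^sub>m (\<i> \<cdot>\<^sub>m b) = b" by (rule m_eqI) auto
  ultimately show False using assms by simp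
qed

lemma Phi_abc: "Phi h 0 m = a" "Phi h 1 m = b" "Phi h (Suc 0) m = b" "x \<ge> 2 \<Longrightarrow> Phi h x m = c"
  by (auto simp: a_def b_def c_def Phi_def)

lemma tr_table_off: "x \<le> 2 \<Longrightarrow> y \<le> 2 \<Longrightarrow> x \<noteq> y \<Longrightarrow> mtrace (Phi h x m * Phi h y m) = 0"
proof -
  assume "x \<le> 2" "y \<le> 2" "x \<noteq> y"
  then have "x = 0 \<and> y = 1 \<or> x = 0 \<and> y = 2 \<or> x = 1 \<and> y = 2 \<or> x = 1 \<and> y = 0 \<or> x = 2 \<and> y = 0 \<or> x = 2 \<and> y = 1"
    by auto
  moreover have "mtrace (b * a) = 0" "mtrace (c * a) = 0" "mtrace (c * b) = 0"
    using tr_ab tr_ac tr_bc tr_comm[of a b] tr_comm[of a c] tr_comm[of b c] by auto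
  ultimately show ?thesis using tr_ab tr_ac tr_bc by (auto simp: Phi_abc)
qed

lemma tr_table_diag:
  assumes "x \<le> 2" "a \<noteq> 0\<^sub>m n n" "b \<noteq> 0\<^sub>m n n"
  shows "mtrace (Phi h x m * Phi h x m) \<noteq> 0"
proof -
  have "x = 0 \<or> x = 1 \<or> x = 2" using assms by auto
  then show ?thesis using assms c_nz[OF assms(3)] tr_sq_pos herm_abc by (auto simp: Phi_abc)
qed

end

lemma Phi_seq_ku:
  assumes hc: "\<forall>l\<in>{1..p}. h l \<in> carrier_mat 2 2"
  shows "k \<le> p \<Longrightarrow> fam2 X p \<Longrightarrow> Phi_seq (local_op p h) \<xi> k (kron_upto X p)
     = kron_upto (\<lambda>j. if j \<le> k then Phi (h j) (\<xi> j) (X j) else X j) p"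
proof (induction k arbitrary: X)
  case 0 then show ?case by (auto intro: ku_cong)
next
  case (Suc k)
  let ?X' = "X(Suc k := Phi (h (Suc k)) (\<xi> (Suc k)) (X (Suc k)))"
  have f: "fam2 ?X' p" using Suc.prems hc by (auto simp: fam2_def intro!: Phi_carrier)
  have "Phi_seq (local_op p h) \<xi> (Suc k) (kron_upto X p) = Phi_seq (local_op p h) \<xi> k (kron_upto ?X' p)"
    using Suc.prems hc by (simp add: Phi_local)
  also have "\<dots> = kron_upto (\<lambda>j. if j \<le> k then Phi (h j) (\<xi> j) (?X' j) else ?X' j) p"
    by (rule Suc.IH[OF _ f]) (use Suc.prems in simp)
  also have "\<dots> = kron_upto (\<lambda>j. if j \<le> Suc k then Phi (h j) (\<xi> j) (X j) else X j) p"
    by (intro ku_cong) (auto simp: le_Suc_eq)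
  finally show ?case .
qed

lemma finite_xi_set: "finite (xi_set p)"
proof -
  have "xi_set p \<subseteq> (\<lambda>f. (\<lambda>l. if l \<in> {1..p} then f l else 0)) ` (PiE {1..p} (\<lambda>_. {0..2::nat}))"
  proof
    fix \<xi> assume x: "\<xi> \<in> xi_set p"
    then have "\<xi> = (\<lambda>l. if l \<in> {1..p} then restrict \<xi> {1..p} l else 0)"
      by (auto simp: xi_set_def)
    moreover have "restrict \<xi> {1..p} \<in> PiE {1..p} (\<lambda>_. {0..2::nat})"
      using x by (auto simp: xi_set_def)
    ultimately show "\<xi> \<in> (\<lambda>f. (\<lambda>l. if l \<in> {1..p} then f l else 0)) ` (PiE {1..p} (\<lambda>_. {0..2::nat}))"
      by blast
  qed
  then show ?thesis by (rule finite_subset) (auto intro: finite_PiE)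
qed

lemma part1:
  fixes p :: nat and h m :: "nat \<Rightarrow> complex mat"
  assumes H: "\<forall>l\<in>{1..p}. h l \<in> carrier_mat 2 2 \<and> hermitian (h l) \<and> h l * h l = 1\<^sub>m 2"
    and M: "\<forall>l\<in>{1..p}. m l \<in> carrier_mat 2 2 \<and> hermitian (m l)
           \<and> m l + h l * m l * h l \<noteq> 0\<^sub>m 2 2 \<and> m l - h l * m l * h l \<noteq> 0\<^sub>m 2 2"
  shows "with_linear_independence p (local_op p h) (kron_upto m p)"
proof -
  have qbl: "qb 2 (h l) (m l)" if "l \<in> {1..p}" for l
    using H M that by (unfold_locales) (auto simp: hermitian_def)
  have fm: "fam2 m p" using M by (auto simp: fam2_def)
  define Q where "Q \<xi> = kron_upto (\<lambda>j. Phi (h j) (\<xi> j) (m j)) p" for \<xi>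
  have fQ: "fam2 (\<lambda>j. Phi (h j) (\<xi> j) (m j)) p" for \<xi>
    using H M by (auto simp: fam2_def intro!: Phi_carrier)
  have QC: "Q \<xi> \<in> carrier_mat (2^p) (2^p)" for \<xi> unfolding Q_def by (rule ku_carrier[OF fQ])
  have QD: "dim_row (Q \<xi>) = 2^p" "dim_col (Q \<xi>) = 2^p" for \<xi> using QC[of \<xi>] by auto
  have PQ: "Phi_seq (local_op p h) \<xi> p (kron_upto m p) = Q \<xi>" for \<xi>
    unfolding Q_def using H fm by (subst Phi_seq_ku) (auto intro!: ku_cong)
  have Mc: "kron_upto m p \<in> carrier_mat (2^p) (2^p)" by (rule ku_carrier[OF fm])
  have trQ: "mtrace (Q \<xi> * Q \<eta>) = (\<Prod>j=1..p. mtrace (Phi (h j) (\<xi> j) (m j) * Phi (h j) (\<eta> j) (m j)))" for \<xi> \<eta>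
  proof -
    have f3: "fam2 (\<lambda>j. Phi (h j) (\<xi> j) (m j) * Phi (h j) (\<eta> j) (m j)) p"
      using fQ[of \<xi>] fQ[of \<eta>] by (auto simp: fam2_def)
    show ?thesis unfolding Q_def by (simp add: ku_mult[OF fQ fQ] ku_trace[OF f3])
  qed
  show ?thesis unfolding with_linear_independence_def
  proof (intro allI impI ballI)
    fix c :: "(nat \<Rightarrow> nat) \<Rightarrow> real" and \<eta>
    assume E: "\<forall>i<dim_row (kron_upto m p). \<forall>j<dim_col (kron_upto m p).
           (\<Sum>\<xi>\<in>xi_set p. complex_of_real (c \<xi>) * Phi_seq (local_op p h) \<xi> p (kron_upto m p) $$ (i, j)) = 0"
      and eta: "\<eta> \<in> xi_set p"
    let ?N = "2^p"
    have E': "(\<Sum>\<xi>\<in>xi_set p. complex_of_real (c \<xi>) * Q \<xi> $$ (i, j)) = 0" if "i < ?N" "j < ?N" for i j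
      using E that Mc by (simp add: PQ)
    have "(\<Sum>\<xi>\<in>xi_set p. complex_of_real (c \<xi>) * mtrace (Q \<xi> * Q \<eta>))
       = (\<Sum>\<xi>\<in>xi_set p. complex_of_real (c \<xi>) * (\<Sum>i<?N. \<Sum>k<?N. Q \<xi> $$ (i,k) * Q \<eta> $$ (k,i)))"
      using QC by (intro sum.cong refl) (simp add: mtrace_def mult_index_sum QD)
    also have "\<dots> = (\<Sum>i<?N. \<Sum>k<?N. (\<Sum>\<xi>\<in>xi_set p. complex_of_real (c \<xi>) * Q \<xi> $$ (i,k)) * Q \<eta> $$ (k,i))"
      by (simp add: sum_distrib_left sum_distrib_right mult.assoc sum.swap[of _ "xi_set p"])
    also have "\<dots> = 0" using E' by simp
    finally have S0: "(\<Sum>\<xi>\<in>xi_set p. complex_of_real (c \<xi>) * mtrace (Q \<xi> * Q \<eta>)) = 0" .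
    have off: "mtrace (Q \<xi> * Q \<eta>) = 0" if xi: "\<xi> \<in> xi_set p" and ne: "\<xi> \<noteq> \<eta>" for \<xi>
    proof -
      obtain l where l: "\<xi> l \<noteq> \<eta> l" using ne by (metis ext)
      then have l1: "l \<in> {1..p}" using xi eta by (auto simp: xi_set_def)
      then have "\<xi> l \<le> 2" "\<eta> l \<le> 2" using xi eta by (auto simp: xi_set_def)
      then have "mtrace (Phi (h l) (\<xi> l) (m l) * Phi (h l) (\<eta> l) (m l)) = 0"
        using qb.tr_table_off[OF qbl[OF l1]] l by auto
      then show ?thesis unfolding trQ using l1 by (intro prod_zero) auto
    qed
    have "(\<Sum>\<xi>\<in>xi_set p. complex_of_real (c \<xi>) * mtrace (Q \<xi> * Q \<eta>)) = complex_of_real (c \<eta>) * mtrace (Q \<eta> * Q \<eta>)"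
      using off eta finite_xi_set by (subst sum.remove[of _ \<eta>]) (auto intro!: sum.neutral)
    then have z: "complex_of_real (c \<eta>) * mtrace (Q \<eta> * Q \<eta>) = 0" using S0 by simp
    have "mtrace (Q \<eta> * Q \<eta>) \<noteq> 0"
    proof -
      have "mtrace (Phi (h l) (\<eta> l) (m l) * Phi (h l) (\<eta> l) (m l)) \<noteq> 0" if l: "l \<in> {1..p}" for l
      proof -
        interpret q: qb 2 "h l" "m l" by (rule qbl[OF l])
        have "\<eta> l \<le> 2" using eta l by (auto simp: xi_set_def)
        moreover have "q.a \<noteq> 0\<^sub>m 2 2"
        proof
          assume "q.a = 0\<^sub>m 2 2"
          then have "2 \<cdot>\<^sub>m q.a = 0\<^sub>m 2 2" by simp
          moreover have "2 \<cdot>\<^sub>m q.a = m l + h l * m l * h l" unfolding q.a_def' by (simp, rule q.m_eqI, auto)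
          ultimately have "m l + h l * m l * h l = 0\<^sub>m 2 2" by metis
          moreover have "m l + h l * m l * h l \<noteq> 0\<^sub>m 2 2" using M l by blast
          ultimately show False by blast
        qed
        moreover have "q.b \<noteq> 0\<^sub>m 2 2"
        proof
          assume "q.b = 0\<^sub>m 2 2"
          then have "2 \<cdot>\<^sub>m q.b = 0\<^sub>m 2 2" by simp
          moreover have "2 \<cdot>\<^sub>m q.b = m l - h l * m l * h l" unfolding q.b_def' by (simp, rule q.m_eqI, auto)
          ultimately have "m l - h l * m l * h l = 0\<^sub>m 2 2" by metis
          moreover have "m l - h l * m l * h l \<noteq> 0\<^sub>m 2 2" using M l by blast
          ultimately show False by blast
        qed
        ultimately show ?thesis by (rule q.tr_table_diag)
      qed
      then show ?thesis unfolding trQ by (subst prod_zero_iff) auto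
    qed
    with z show "c \<eta> = 0" by simp
  qed
qed

lemma pow_invol:
  fixes A :: "complex mat"
  assumes A: "A \<in> carrier_mat n n" and AA: "A * A = 1\<^sub>m n"
  shows "(c \<cdot>\<^sub>m A) ^\<^sub>m k = (c^k) \<cdot>\<^sub>m (if even k then 1\<^sub>m n else A)"
proof (induction k)
  case 0 then show ?case using A by (intro eq_matI) auto
next
  case (Suc k)
  interpret sqn n .
  have "(c \<cdot>\<^sub>m A) ^\<^sub>m Suc k = (c^k) \<cdot>\<^sub>m (if even k then 1\<^sub>m n else A) * (c \<cdot>\<^sub>m A)"
    using Suc by simp
  also have "\<dots> = (c^Suc k) \<cdot>\<^sub>m (if even (Suc k) then 1\<^sub>m n else A)"
    using A AA by (cases "even k") (auto intro!: eq_matI simp: mult.commute)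
  finally show ?case .
qed

lemma exp_series_parity:
  fixes c d g :: complex
  shows "(\<lambda>k. c^k * (if even k then d else g) / of_nat (fact k)) sums
          (d * ((exp c + exp (-c)) / 2) + g * ((exp c - exp (-c)) / 2))"
proof -
  have e1: "(\<lambda>k. c^k / of_nat (fact k)) sums exp c"
    using exp_converges[of c] by (simp add: scaleR_conv_of_real divide_inverse mult.commute)
  have e2: "(\<lambda>k. (-c)^k / of_nat (fact k)) sums exp (-c)"
    using exp_converges[of "-c"] by (simp add: scaleR_conv_of_real divide_inverse mult.commute)
  have "(\<lambda>k. d * ((c^k / of_nat (fact k) + (-c)^k / of_nat (fact k)) / 2) +
             g * ((c^k / of_nat (fact k) - (-c)^k / of_nat (fact k)) / 2)) sums
        (d * ((exp c + exp (-c)) / 2) + g * ((exp c - exp (-c)) / 2))"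
    by (intro sums_add sums_mult sums_divide sums_add sums_diff e1 e2)
  moreover have "d * ((c^k / of_nat (fact k) + (-c)^k / of_nat (fact k)) / 2) +
             g * ((c^k / of_nat (fact k) - (-c)^k / of_nat (fact k)) / 2)
       = c^k * (if even k then d else g) / of_nat (fact k)" for k
    by (cases "even k") (auto simp: field_simps)
  ultimately show ?thesis by simp
qed

lemma mat_exp_invol:
  fixes A :: "complex mat"
  assumes A: "A \<in> carrier_mat n n" and AA: "A * A = 1\<^sub>m n"
  shows "mat_exp ((- \<i> * complex_of_real t) \<cdot>\<^sub>m A) =
     complex_of_real (cos t) \<cdot>\<^sub>m 1\<^sub>m n + (- \<i> * complex_of_real (sin t)) \<cdot>\<^sub>m A"
proof (rule eq_matI)
  fix i j assume ij: "i < dim_row (complex_of_real (cos t) \<cdot>\<^sub>m 1\<^sub>m n + (- \<i> * complex_of_real (sin t)) \<cdot>\<^sub>m A)"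
    "j < dim_col (complex_of_real (cos t) \<cdot>\<^sub>m 1\<^sub>m n + (- \<i> * complex_of_real (sin t)) \<cdot>\<^sub>m A)"
  then have i: "i < n" and j: "j < n" using A by auto
  define c where "c = - \<i> * complex_of_real t"
  have ent: "((c \<cdot>\<^sub>m A) ^\<^sub>m k) $$ (i,j) = c^k * (if even k then (if i = j then 1 else 0) else A $$ (i,j))" for k
    using i j A by (simp add: pow_invol[OF A AA])
  have ser: "(\<lambda>k. ((c \<cdot>\<^sub>m A) ^\<^sub>m k) $$ (i,j) / of_nat (fact k)) sums
      ((if i = j then 1 else 0) * ((exp c + exp (-c)) / 2) + A $$ (i,j) * ((exp c - exp (-c)) / 2))"
    unfolding ent by (rule exp_series_parity)
  have cs: "(exp c + exp (-c)) / 2 = complex_of_real (cos t)"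
    unfolding c_def using cos_exp_eq[of "complex_of_real t"] by (simp add: cos_of_real mult.commute)
  have sn: "(exp c - exp (-c)) / 2 = - \<i> * complex_of_real (sin t)"
  proof -
    have "complex_of_real (sin t) = (exp (\<i> * complex_of_real t) - exp (- (\<i> * complex_of_real t))) / (2 * \<i>)"
      using sin_exp_eq[of "complex_of_real t"] by (simp add: sin_of_real)
    then have "- \<i> * complex_of_real (sin t) = - \<i> * ((exp (\<i> * complex_of_real t) - exp (- (\<i> * complex_of_real t))) / (2 * \<i>))"
      by simp
    also have "\<dots> = (exp (- (\<i> * complex_of_real t)) - exp (\<i> * complex_of_real t)) / 2"
      by (simp add: field_simps)
    finally show ?thesis unfolding c_def by (simp add: mult.commute)
  qed
  have "(\<Sum>k. ((c \<cdot>\<^sub>m A) ^\<^sub>m k) $$ (i,j) / of_nat (fact k)) =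
      (if i = j then 1 else 0) * complex_of_real (cos t) + A $$ (i,j) * (- \<i> * complex_of_real (sin t))"
    unfolding sums_unique[OF ser, symmetric] cs sn ..
  moreover have "mat_exp ((- \<i> * complex_of_real t) \<cdot>\<^sub>m A) $$ (i, j) = (\<Sum>k. ((c \<cdot>\<^sub>m A) ^\<^sub>m k) $$ (i,j) / of_nat (fact k))"
    using i j A unfolding mat_exp_def c_def by simp
  moreover have "(complex_of_real (cos t) \<cdot>\<^sub>m 1\<^sub>m n + (- \<i> * complex_of_real (sin t)) \<cdot>\<^sub>m A) $$ (i, j)
     = (if i = j then 1 else 0) * complex_of_real (cos t) + A $$ (i,j) * (- \<i> * complex_of_real (sin t))"
    using i j A by (simp only: index_add_mat index_smult_mat index_one_mat carrier_matD dim_row_mat dim_col_mat) (simp add: mult.commute)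
  ultimately show "mat_exp ((- \<i> * complex_of_real t) \<cdot>\<^sub>m A) $$ (i, j) =
     (complex_of_real (cos t) \<cdot>\<^sub>m 1\<^sub>m n + (- \<i> * complex_of_real (sin t)) \<cdot>\<^sub>m A) $$ (i, j)"
    by simp
qed (use A in \<open>auto simp: mat_exp_def\<close>)

definition uq :: "complex mat \<Rightarrow> real \<Rightarrow> complex mat" where
  "uq h t = complex_of_real (cos t) \<cdot>\<^sub>m 1\<^sub>m 2 + (- \<i> * complex_of_real (sin t)) \<cdot>\<^sub>m h"

lemma uq_carrier[simp]: "h \<in> carrier_mat 2 2 \<Longrightarrow> uq h t \<in> carrier_mat 2 2"
  by (simp add: uq_def)

lemma uq_one: "h \<in> carrier_mat 2 2 \<Longrightarrow> uq h t * 1\<^sub>m 2 = uq h t"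
  by (rule right_mult_one_mat[of _ 2]) simp

lemma pow_split: "1 \<le> l \<Longrightarrow> l \<le> p \<Longrightarrow> (2::nat)^(l-1) * 2 * 2^(p-l) = 2^p"
  by (metis One_nat_def Suc_pred le_add_diff_inverse less_eq_Suc_le power_Suc2 power_add)

lemma one_slot: "1 \<le> l \<Longrightarrow> l \<le> p \<Longrightarrow> 1\<^sub>m (2^p) = kron (kron (1\<^sub>m (2^(l-1))) (1\<^sub>m 2)) (1\<^sub>m (2^(p-l)))"
proof -
  assume "1 \<le> l" "l \<le> p"
  then have "(2::nat)^(l-1) * 2 * 2^(p-l) = 2^p" by (rule pow_split)
  then show ?thesis by (simp add: kron_one)
qed

lemma local_op_sq:
  assumes "1 \<le> l" "l \<le> p" "h l \<in> carrier_mat 2 2" "h l * h l = 1\<^sub>m 2"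
  shows "local_op p h l * local_op p h l = 1\<^sub>m (2^p)"
  using assms unfolding local_op_def' by (simp add: slot_mult_left one_slot[of l p])

lemma exp_local:
  assumes "1 \<le> l" "l \<le> p" "h l \<in> carrier_mat 2 2" "h l * h l = 1\<^sub>m 2"
  shows "mat_exp ((- \<i> * complex_of_real t) \<cdot>\<^sub>m local_op p h l) =
     kron (kron (1\<^sub>m (2^(l-1))) (uq (h l) t)) (1\<^sub>m (2^(p-l)))"
proof -
  have "mat_exp ((- \<i> * complex_of_real t) \<cdot>\<^sub>m local_op p h l) =
     complex_of_real (cos t) \<cdot>\<^sub>m 1\<^sub>m (2^p) + (- \<i> * complex_of_real (sin t)) \<cdot>\<^sub>m local_op p h l"
    using assms by (intro mat_exp_invol local_op_carrier local_op_sq)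
  also have "\<dots> = kron (kron (1\<^sub>m (2^(l-1))) (uq (h l) t)) (1\<^sub>m (2^(p-l)))"
    unfolding one_slot[OF assms(1,2)] local_op_def' uq_def slot_smult using assms
    by (subst slot_add[where a = "2^(l-1)" and r = "2^(p-l)"]) auto
  finally show ?thesis .
qed

lemma exp_local_mult:
  assumes "1 \<le> l" "l \<le> p" "h l \<in> carrier_mat 2 2" "h l * h l = 1\<^sub>m 2" "fam2 X p"
  shows "mat_exp ((- \<i> * complex_of_real t) \<cdot>\<^sub>m local_op p h l) * kron_upto X p =
     kron_upto (X(l := uq (h l) t * X l)) p"
proof -
  have f: "fam2 X (l-1)" "fam2 (\<lambda>j. X (l+j)) (p-l)" "X l \<in> carrier_mat 2 2"
    using fam2_shift[OF assms(5,1,2)] by auto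
  show ?thesis
    unfolding exp_local[of l p h t, OF assms(1-4)] ku_slot'[OF assms(1,2), of X] ku_slot[OF assms(1,2)]
    using f assms ku_carrier[OF f(1)] ku_carrier[OF f(2)] by (intro slot_mult_left) auto
qed

lemma qnn_U_ku:
  assumes H: "\<forall>l\<in>{1..p}. h l \<in> carrier_mat 2 2 \<and> h l * h l = 1\<^sub>m 2"
  shows "k \<le> p \<Longrightarrow> qnn_U (2^p) (local_op p h) \<theta> k = kron_upto (\<lambda>j. if j \<le> k then uq (h j) (\<theta> j) else 1\<^sub>m 2) p"
proof (induction k)
  case 0 then show ?case by (simp add: ku_one)
next
  case (Suc k)
  let ?X = "\<lambda>j. if j \<le> k then uq (h j) (\<theta> j) else 1\<^sub>m 2"
  have f: "fam2 ?X p" using H by (auto simp: fam2_def)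
  have "qnn_U (2^p) (local_op p h) \<theta> (Suc k) =
     mat_exp ((- \<i> * complex_of_real (\<theta> (Suc k))) \<cdot>\<^sub>m local_op p h (Suc k)) * kron_upto ?X p"
    using Suc by simp
  also have "\<dots> = kron_upto (?X(Suc k := uq (h (Suc k)) (\<theta> (Suc k)) * ?X (Suc k))) p"
    using Suc.prems H f by (intro exp_local_mult) auto
  also have "\<dots> = kron_upto (\<lambda>j. if j \<le> Suc k then uq (h j) (\<theta> j) else 1\<^sub>m 2) p"
    using H Suc.prems by (intro ku_cong) (auto simp: le_Suc_eq uq_one)
  finally show ?case .
qed

lemma sum_2: "(\<Sum>i<2. f i) = f 0 + f (1::nat)"
  by (simp add: numeral_2_eq_2)

lemma less2: "(i::nat) < 2 \<longleftrightarrow> i = 0 \<or> i = 1" by auto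

lemma polar_CH:
  fixes X Y :: "complex mat"
  assumes X: "X \<in> carrier_mat 2 2" and Y: "Y \<in> carrier_mat 2 2"
  shows "X * Y + Y * X = mtrace X \<cdot>\<^sub>m Y + mtrace Y \<cdot>\<^sub>m X + (mtrace (X * Y) - mtrace X * mtrace Y) \<cdot>\<^sub>m 1\<^sub>m 2"
proof (rule eq_matI)
  fix i j assume "i < dim_row (mtrace X \<cdot>\<^sub>m Y + mtrace Y \<cdot>\<^sub>m X + (mtrace (X * Y) - mtrace X * mtrace Y) \<cdot>\<^sub>m 1\<^sub>m 2)"
    "j < dim_col (mtrace X \<cdot>\<^sub>m Y + mtrace Y \<cdot>\<^sub>m X + (mtrace (X * Y) - mtrace X * mtrace Y) \<cdot>\<^sub>m 1\<^sub>m 2)"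
  then have ij: "i < 2" "j < 2" by auto
  have tr: "mtrace Z = Z $$ (0,0) + Z $$ (1,1)" if "Z \<in> carrier_mat 2 2" for Z
    using that by (simp add: mtrace_def sum_2)
  have mm: "(Z * W) $$ (k,l) = Z $$ (k,0) * W $$ (0,l) + Z $$ (k,1) * W $$ (1,l)"
    if "Z \<in> carrier_mat 2 2" "W \<in> carrier_mat 2 2" "k < 2" "l < 2" for Z W k l
    using that by (simp add: mult_index_sum sum_2)
  show "(X * Y + Y * X) $$ (i, j) = (mtrace X \<cdot>\<^sub>m Y + mtrace Y \<cdot>\<^sub>m X + (mtrace (X * Y) - mtrace X * mtrace Y) \<cdot>\<^sub>m 1\<^sub>m 2) $$ (i, j)"
    using ij X Y unfolding less2
    by (auto simp: tr mm algebra_simps)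
qed (use X Y in auto)

lemma traceless_sq:
  fixes X :: "complex mat"
  assumes X: "X \<in> carrier_mat 2 2" and t: "mtrace X = 0"
  shows "X * X = (mtrace (X * X) / 2) \<cdot>\<^sub>m 1\<^sub>m 2"
proof -
  have E: "X * X + X * X = 0 \<cdot>\<^sub>m X + 0 \<cdot>\<^sub>m X + (mtrace (X * X) - 0 * 0) \<cdot>\<^sub>m 1\<^sub>m 2"
    using polar_CH[OF X X] t by simp
  show ?thesis
  proof (rule eq_matI)
    fix i j assume "i < dim_row ((mtrace (X * X) / 2) \<cdot>\<^sub>m 1\<^sub>m 2)" "j < dim_col ((mtrace (X * X) / 2) \<cdot>\<^sub>m 1\<^sub>m 2)"
    then have ij: "i < 2" "j < 2" by auto
    have "(X * X + X * X) $$ (i,j) = (0 \<cdot>\<^sub>m X + 0 \<cdot>\<^sub>m X + (mtrace (X * X) - 0 * 0) \<cdot>\<^sub>m 1\<^sub>m 2) $$ (i,j)"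
      by (simp only: E)
    then have "2 * (X * X) $$ (i,j) = mtrace (X * X) * (if i = j then 1 else 0)"
      using ij X by simp
    then show "(X * X) $$ (i, j) = ((mtrace (X * X) / 2) \<cdot>\<^sub>m 1\<^sub>m 2) $$ (i, j)"
      using ij by (auto simp: field_simps)
  qed (use X in auto)
qed


lemma aux: fixes co s M HM MH HMH :: complex
  assumes rel: "co^2 + s^2 = 1"
  shows "co * (co * M + \<i> * s * HM) - \<i> * s * (co * MH + \<i> * s * HMH) = (M + HMH)/2 + (co^2 - s^2) * (M - HMH)/2 + s * (co * (\<i> * (HM - MH)))"
proof -
  have s2: "s^2 = 1 - co^2" using rel by (simp add: algebra_simps)
  have "co * (co * M + \<i> * s * HM) - \<i> * s * (co * MH + \<i> * s * HMH) = co^2 * M + s^2 * HMH + \<i> * s * co * (HM - MH)"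
    by (simp add: algebra_simps power2_eq_square)
  also have "\<dots> = (M + HMH)/2 + (co^2 - s^2) * (M - HMH)/2 + s * (co * (\<i> * (HM - MH)))"
    unfolding s2 by (simp add: field_simps power2_eq_square)
  finally show ?thesis .
qed

definition st :: "complex mat \<Rightarrow> complex mat" where
  "st Y = (1/2) \<cdot>\<^sub>m (1\<^sub>m 2 + Y)"

lemma st_props:
  assumes Y: "Y \<in> carrier_mat 2 2" and YY: "Y * Y = 1\<^sub>m 2" and hY: "adj Y = Y" and tY: "mtrace Y = 0"
  shows "st Y \<in> carrier_mat 2 2" "adj (st Y) = st Y" "st Y * adj (st Y) = st Y" "mtrace (st Y) = 1"
    "\<And>Z. Z \<in> carrier_mat 2 2 \<Longrightarrow> mtrace (st Y * Z) = (1/2) * mtrace Z + (1/2) * mtrace (Y * Z)"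
proof -
  interpret sqn 2 .
  show c: "st Y \<in> carrier_mat 2 2" using Y by (simp add: st_def)
  show a: "adj (st Y) = st Y" using Y hY by (simp add: st_def adj_simps adj_one)
  have "st Y * st Y = st Y"
    unfolding st_def by (insert Y YY) (simp, rule m_eqI, auto simp: field_simps)
  then show "st Y * adj (st Y) = st Y" unfolding a .
  show "mtrace (st Y) = 1" using Y tY by (simp add: st_def tr_simps trace_one)
  show "mtrace (st Y * Z) = (1/2) * mtrace Z + (1/2) * mtrace (Y * Z)" if "Z \<in> carrier_mat 2 2" for Z
    using Y that by (simp add: st_def tr_simps algebra_simps)
qed

locale qb2 = qb 2 h m for h m +
  assumes anz: "a \<noteq> 0\<^sub>m 2 2" and bnz: "b \<noteq> 0\<^sub>m 2 2"
begin

lemma tr_h: "mtrace h = 0"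
proof (rule ccontr)
  define t where "t = mtrace h"
  assume "mtrace h \<noteq> 0"
  then have t0: "t \<noteq> 0" by (simp add: t_def)
  have E: "h * h + h * h = t \<cdot>\<^sub>m h + t \<cdot>\<^sub>m h + (mtrace (h * h) - t * t) \<cdot>\<^sub>m 1\<^sub>m 2"
    unfolding t_def by (rule polar_CH) auto
  have trhh: "mtrace (h * h) = 2" by (simp add: trace_one)
  have ent: "2 * (if i = j then 1 else 0) = 2 * t * h $$ (i,j) + (2 - t * t) * (if i = j then 1 else 0)"
    if "i < 2" "j < 2" for i j
  proof -
    have "(h * h + h * h) $$ (i,j) = (t \<cdot>\<^sub>m h + t \<cdot>\<^sub>m h + (mtrace (h * h) - t * t) \<cdot>\<^sub>m 1\<^sub>m 2) $$ (i,j)"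
      by (simp only: E)
    then show ?thesis using that unfolding trhh by (simp add: algebra_simps)
  qed
  have hs: "h = (t/2) \<cdot>\<^sub>m 1\<^sub>m 2"
  proof (rule eq_matI)
    fix i j assume "i < dim_row ((t/2) \<cdot>\<^sub>m 1\<^sub>m (2::nat))" "j < dim_col ((t/2) \<cdot>\<^sub>m 1\<^sub>m (2::nat))"
    then have ij: "i < 2" "j < 2" by auto
    have "2 * t * h $$ (i,j) = t * t * (if i = j then 1 else 0)"
      using ent[OF ij] by (auto simp: algebra_simps split: if_splits)
    then show "h $$ (i,j) = ((t/2) \<cdot>\<^sub>m 1\<^sub>m 2) $$ (i,j)"
      using ij t0 by (auto simp: field_simps split: if_splits)
  qed auto
  have "((t/2) \<cdot>\<^sub>m 1\<^sub>m 2) * ((t/2) \<cdot>\<^sub>m 1\<^sub>m 2) = 1\<^sub>m 2" using hh hs by metis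
  then have "(((t/2) \<cdot>\<^sub>m 1\<^sub>m 2) * ((t/2) \<cdot>\<^sub>m 1\<^sub>m (2::nat))) $$ (0,0) = 1" by simp
  then have s2: "(t/2) * (t/2) = 1"
    by (simp add: mult_index_sum sum_2)
  have "b = 0\<^sub>m 2 2"
  proof -
    have "b = (1/2) \<cdot>\<^sub>m (m - ((t/2) \<cdot>\<^sub>m 1\<^sub>m 2) * (m * ((t/2) \<cdot>\<^sub>m 1\<^sub>m 2)))"
      unfolding b_def' by (subst (1 2) hs) simp
    also have "\<dots> = 0\<^sub>m 2 2"
    proof (rule m_eqI)
      have s4: "t * t = 4" using s2 by (simp add: field_simps)
      fix i j :: nat assume ij: "i < 2" "j < 2"
      have "(((t/2) \<cdot>\<^sub>m 1\<^sub>m 2) * (m * ((t/2) \<cdot>\<^sub>m 1\<^sub>m 2))) $$ (i,j) = (t * t / 4) * m $$ (i,j)"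
        using ij by (simp add: mult_index_sum sum_2 less2)
      then show "((1/2) \<cdot>\<^sub>m (m - ((t/2) \<cdot>\<^sub>m 1\<^sub>m 2) * (m * ((t/2) \<cdot>\<^sub>m 1\<^sub>m 2)))) $$ (i,j) = 0\<^sub>m 2 2 $$ (i,j)"
        using ij by (simp add: s4)
    qed auto
    finally show ?thesis .
  qed
  then show False using bnz by simp
qed


lemma tr_b: "mtrace b = 0"
  by (rule tr_anti) (auto simp: b_def', rule m_eqI, auto simp: algebra_simps)

lemma tr_hb: "mtrace (h * b) = 0"
  by (rule tr_anti) (auto simp: b_def', rule m_eqI, auto simp: algebra_simps)

lemma tr_c: "mtrace c = 0"
  unfolding c_hb using tr_hb by (simp add: tr_simps)

lemma tr_hc: "mtrace (h * c) = 0"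
  unfolding c_hb using tr_b by (simp add: tr_simps)

lemma tr_a_real: "mtrace a = complex_of_real (Re (mtrace a))"
  by (rule cnj_eq_real) (metis abc_carrier(1) herm_abc(1) trace_adj)

lemma tr_ha_real: "mtrace (h * a) = complex_of_real (Re (mtrace (h * a)))"
  by (rule cnj_eq_real) (rule trace_herm_real[of h 2 a]; simp add: herm_abc)

definition "lam = sqrt (Re (mtrace (b * b)) / 2)"

lemma trbb_pos: "Re (mtrace (b * b)) > 0"
  using trace_self_adj_nz[of b 2 2] bnz herm_abc by simp

lemma lam_pos: "lam > 0"
  using trbb_pos by (simp add: lam_def)

lemma trbb: "mtrace (b * b) = complex_of_real (2 * lam^2)"
proof -
  have "mtrace (b * b) = complex_of_real (Re (mtrace (b * b)))"
    by (rule cnj_eq_real) (rule trace_herm_real[of b 2 b]; simp add: herm_abc)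
  then show ?thesis using trbb_pos by (simp add: lam_def)
qed

lemma bb: "b * b = complex_of_real (lam^2) \<cdot>\<^sub>m 1\<^sub>m 2"
  using traceless_sq[of b] tr_b trbb by simp

lemma cc: "c * c = b * b"
  by (simp add: b_def' c_def', rule m_eqI, auto simp: algebra_simps)

definition "B = complex_of_real (1 / lam) \<cdot>\<^sub>m b"
definition "B' = complex_of_real (1 / lam) \<cdot>\<^sub>m c"

lemma BB_carrier[simp]: "B \<in> carrier_mat 2 2" "B' \<in> carrier_mat 2 2"
  by (auto simp: B_def B'_def)

lemma BB_dims[simp]: "dim_row B = 2" "dim_col B = 2" "dim_row B' = 2" "dim_col B' = 2"
  by (auto simp: B_def B'_def)

lemma BB_sq: "B * B = 1\<^sub>m 2" "B' * B' = 1\<^sub>m 2"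
proof -
  have l: "complex_of_real (1/lam) * complex_of_real (1/lam) * complex_of_real (lam^2) = 1"
    using lam_pos by (simp add: field_simps power2_eq_square)
  show "B * B = 1\<^sub>m 2" unfolding B_def using l
    by (simp add: bb) (rule m_eqI, auto simp: mult.assoc[symmetric])
  show "B' * B' = 1\<^sub>m 2" unfolding B'_def using l
    by (simp add: cc bb) (rule m_eqI, auto simp: mult.assoc[symmetric])
qed

lemma BB_herm: "adj B = B" "adj B' = B'"
  by (auto simp: B_def B'_def adj_simps herm_abc)

lemma hB: "h * B = - (B * h)"
  unfolding B_def by (simp add: b_def', rule m_eqI, auto simp: algebra_simps)

lemma BB_traces:
  "mtrace B = 0" "mtrace B' = 0"
  "mtrace (B * a) = 0" "mtrace (B * b) = complex_of_real (2 * lam)" "mtrace (B * c) = 0"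
  "mtrace (B' * a) = 0" "mtrace (B' * b) = 0" "mtrace (B' * c) = complex_of_real (2 * lam)"
  "mtrace (B * B) = 2" "mtrace (B' * B') = 2" "mtrace (B * B') = 0" "mtrace (B' * B) = 0"
  "mtrace (h * B) = 0" "mtrace (h * B') = 0"
proof -
  have ba: "mtrace (b * a) = 0" using tr_ab tr_comm[of a b] by simp
  have ca: "mtrace (c * a) = 0" using tr_ac tr_comm[of a c] by simp
  have cb: "mtrace (c * b) = 0" using tr_bc tr_comm[of b c] by simp
  have l: "complex_of_real (1/lam) * complex_of_real (2 * lam^2) = complex_of_real (2 * lam)"
    using lam_pos by (simp add: field_simps power2_eq_square)
  show "mtrace B = 0" "mtrace B' = 0" "mtrace (B * a) = 0" "mtrace (B * c) = 0"
    "mtrace (B' * a) = 0" "mtrace (B' * b) = 0" "mtrace (h * B) = 0" "mtrace (h * B') = 0"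
    unfolding B_def B'_def using tr_b tr_c ba ca cb tr_bc tr_hb tr_hc by (simp_all add: tr_simps)
  show "mtrace (B * b) = complex_of_real (2 * lam)" "mtrace (B' * c) = complex_of_real (2 * lam)"
    unfolding B_def B'_def using l trbb by (simp_all add: tr_simps cc)
  show "mtrace (B * B) = 2" "mtrace (B' * B') = 2" using BB_sq by (simp_all add: trace_one)
  show "mtrace (B * B') = 0" "mtrace (B' * B) = 0"
    unfolding B_def B'_def using tr_bc cb by (simp_all add: tr_simps)
qed


lemma conj_m: "adj (uq h t) * (m * uq h t) =
   a + complex_of_real (cos (2*t)) \<cdot>\<^sub>m b + complex_of_real (sin (2*t)) \<cdot>\<^sub>m c"
proof -
  have adju: "adj (uq h t) = complex_of_real (cos t) \<cdot>\<^sub>m 1\<^sub>m 2 + (\<i> * complex_of_real (sin t)) \<cdot>\<^sub>m h"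
    by (simp add: uq_def adj_simps adj_one)
  have rel: "complex_of_real (cos t) ^ 2 + complex_of_real (sin t) ^ 2 = 1"
    unfolding of_real_power[symmetric] of_real_add[symmetric] by simp
  have ii: "\<i> * \<i> = -1" by simp
  have c2: "complex_of_real (cos (2*t)) = complex_of_real (cos t) ^ 2 - complex_of_real (sin t) ^ 2"
    by (simp add: cos_double)
  have s2: "complex_of_real (sin (2*t)) = 2 * complex_of_real (sin t) * complex_of_real (cos t)"
    by (simp add: sin_double)
  show ?thesis unfolding adju unfolding uq_def a_def' b_def' c_def' c2 s2
    by (simp, rule m_eqI, simp_all, rule aux[OF rel])
qed

lemma tr_conj:
  assumes "\<sigma> \<in> carrier_mat 2 2"
  shows "mtrace (uq h t * \<sigma> * adj (uq h t) * m) =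
    mtrace (\<sigma> * a) + complex_of_real (cos (2*t)) * mtrace (\<sigma> * b) + complex_of_real (sin (2*t)) * mtrace (\<sigma> * c)"
proof -
  have "mtrace (uq h t * \<sigma> * adj (uq h t) * m) = mtrace (uq h t * (\<sigma> * (adj (uq h t) * m)))"
    using assms by simp
  also have "\<dots> = mtrace ((\<sigma> * (adj (uq h t) * m)) * uq h t)"
    using assms by (intro tr_comm) auto
  also have "\<dots> = mtrace (\<sigma> * (adj (uq h t) * (m * uq h t)))"
    using assms by simp
  also have "\<dots> = mtrace (\<sigma> * (a + complex_of_real (cos (2*t)) \<cdot>\<^sub>m b + complex_of_real (sin (2*t)) \<cdot>\<^sub>m c))"
    by (simp only: conj_m)
  also have "\<dots> = mtrace (\<sigma> * a) + complex_of_real (cos (2*t)) * mtrace (\<sigma> * b) + complex_of_real (sin (2*t)) * mtrace (\<sigma> * c)"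
    using assms by (simp add: tr_simps)
  finally show ?thesis .
qed


definition "X1 = (3/5) \<cdot>\<^sub>m B + (4/5) \<cdot>\<^sub>m h"
definition "Xe e = complex_of_real e \<cdot>\<^sub>m h"

definition "ta = Re (mtrace a)"
definition "v = Re (mtrace (h * a))"

lemma X1_props: "X1 \<in> carrier_mat 2 2" "X1 * X1 = 1\<^sub>m 2" "adj X1 = X1" "mtrace X1 = 0"
proof -
  show "X1 \<in> carrier_mat 2 2" by (simp add: X1_def)
  show "X1 * X1 = 1\<^sub>m 2" unfolding X1_def
    by (simp add: hB BB_sq, rule m_eqI, auto simp: algebra_simps)
  show "adj X1 = X1" by (simp add: X1_def adj_simps BB_herm)
  show "mtrace X1 = 0" by (simp add: X1_def tr_simps BB_traces tr_h)
qed

lemma X2_props: "B' \<in> carrier_mat 2 2" "B' * B' = 1\<^sub>m 2" "adj B' = B'" "mtrace B' = 0"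
  using BB_sq BB_herm BB_traces by auto

lemma Xe_props: "e * e = 1 \<Longrightarrow> Xe e \<in> carrier_mat 2 2 \<and> Xe e * Xe e = 1\<^sub>m 2 \<and> adj (Xe e) = Xe e \<and> mtrace (Xe e) = 0"
proof -
  assume e: "e * e = 1"
  have e': "complex_of_real e * complex_of_real e = 1" using e by (metis of_real_1 of_real_mult)
  have "complex_of_real e \<cdot>\<^sub>m h * (complex_of_real e \<cdot>\<^sub>m h) = 1\<^sub>m 2"
    by (simp add: e', rule m_eqI, auto simp: mult.assoc[symmetric] e')
  moreover have "adj (complex_of_real e \<cdot>\<^sub>m h) = complex_of_real e \<cdot>\<^sub>m h" by (simp add: adj_simps)
  moreover have "mtrace (complex_of_real e \<cdot>\<^sub>m h) = 0" using tr_h by (simp add: tr_simps)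
  ultimately show ?thesis unfolding Xe_def by simp
qed

lemma F_gen:
  assumes "Y \<in> carrier_mat 2 2" "Y * Y = 1\<^sub>m 2" "adj Y = Y" "mtrace Y = 0"
  shows "mtrace (uq h t * st Y * adj (uq h t) * m) = (1/2) * mtrace a + (1/2) * mtrace (Y * a)
     + complex_of_real (cos (2*t)) * ((1/2) * mtrace (Y * b)) + complex_of_real (sin (2*t)) * ((1/2) * mtrace (Y * c))"
  unfolding tr_conj[OF st_props(1)[OF assms]] using assms st_props[OF assms] tr_b tr_c by simp

lemma F1: "mtrace (uq h t * st X1 * adj (uq h t) * m) = complex_of_real (ta/2 + 2/5 * v + 3/5 * lam * cos (2 * t))"
proof -
  have e: "mtrace (X1 * a) = (4/5) * complex_of_real v" "mtrace (X1 * b) = (6/5) * complex_of_real lam" "mtrace (X1 * c) = 0"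
    unfolding X1_def v_def using BB_traces tr_hb tr_hc tr_ha_real by (simp_all add: tr_simps)
  show ?thesis unfolding F_gen[OF X1_props] e ta_def by (subst tr_a_real) (simp add: field_simps)
qed

lemma F2: "mtrace (uq h t * st B' * adj (uq h t) * m) = complex_of_real (ta/2 + lam * sin (2 * t))"
proof -
  show ?thesis unfolding F_gen[OF X2_props] ta_def BB_traces by (subst tr_a_real) (simp add: field_simps)
qed

lemma Fe: "e * e = 1 \<Longrightarrow> mtrace (uq h t * st (Xe e) * adj (uq h t) * m) = complex_of_real (ta/2 + e/2 * v)"
proof -
  assume e: "e * e = 1"
  have p: "Xe e \<in> carrier_mat 2 2" "Xe e * Xe e = 1\<^sub>m 2" "adj (Xe e) = Xe e" "mtrace (Xe e) = 0"
    using Xe_props[OF e] by auto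
  have q: "mtrace (Xe e * a) = complex_of_real e * complex_of_real v" "mtrace (Xe e * b) = 0" "mtrace (Xe e * c) = 0"
    unfolding Xe_def v_def using tr_hb tr_hc tr_ha_real by (simp_all add: tr_simps)
  show ?thesis unfolding F_gen[OF p] q ta_def by (subst tr_a_real) (simp add: field_simps)
qed

lemma const_nz: "\<exists>e. e * e = (1::real) \<and> ta/2 + e/2 * v \<noteq> 0"
proof (rule ccontr)
  assume "\<not> ?thesis"
  then have "ta/2 + 1/2 * v = 0" "ta/2 + (-1)/2 * v = 0" by (metis mult_1 mult_minus1 minus_minus)+
  then have z: "ta = 0" "v = 0" by linarith+
  then have t1: "mtrace a = 0" "mtrace (h * a) = 0" using tr_a_real tr_ha_real by (simp_all add: ta_def v_def)
  have E: "h * a + a * h = mtrace h \<cdot>\<^sub>m a + mtrace a \<cdot>\<^sub>m h + (mtrace (h * a) - mtrace h * mtrace a) \<cdot>\<^sub>m 1\<^sub>m 2"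
    by (rule polar_CH) auto
  have "h * a + h * a = 0\<^sub>m 2 2" by (insert E) (unfold t1 tr_h ha[symmetric], simp, rule m_eqI, auto)
  then have "h * a = 0\<^sub>m 2 2"
  proof -
    assume z: "h * a + h * a = 0\<^sub>m 2 2"
    have "h * a = (1/2) \<cdot>\<^sub>m (h * a + h * a)" by (rule m_eqI) auto
    also have "\<dots> = 0\<^sub>m 2 2" unfolding z by simp
    finally show ?thesis .
  qed
  then have "h * (h * a) = 0\<^sub>m 2 2" by simp
  then show False using anz by simp
qed

lemma functionals:
  "mtrace (st X1 * B) = 3/5" "mtrace (st B' * B) = 0" "e * e = 1 \<Longrightarrow> mtrace (st (Xe e) * B) = 0"
  "mtrace (st X1 * B') = 0" "mtrace (st B' * B') = 1" "e * e = 1 \<Longrightarrow> mtrace (st (Xe e) * B') = 0"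
proof -
  show "mtrace (st X1 * B) = 3/5" "mtrace (st X1 * B') = 0"
    using st_props(5)[OF X1_props] BB_traces by (simp_all add: X1_def tr_simps)
  show "mtrace (st B' * B) = 0" "mtrace (st B' * B') = 1"
    using st_props(5)[OF X2_props] BB_traces by simp_all
  show "e * e = 1 \<Longrightarrow> mtrace (st (Xe e) * B) = 0" "e * e = 1 \<Longrightarrow> mtrace (st (Xe e) * B') = 0"
    using st_props(5) Xe_props BB_traces by (simp_all add: Xe_def tr_simps)
qed

end

lemma mult2[simp]: "(A::complex mat) \<in> carrier_mat 2 2 \<Longrightarrow> B \<in> carrier_mat 2 2 \<Longrightarrow> A * B \<in> carrier_mat 2 2"
  by auto

locale P2 =
  fixes p :: nat and h m :: "nat \<Rightarrow> complex mat"
  assumes p1: "p \<ge> 1"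
    and H: "\<forall>l\<in>{1..p}. h l \<in> carrier_mat 2 2 \<and> hermitian (h l) \<and> h l * h l = 1\<^sub>m 2"
    and M: "\<forall>l\<in>{1..p}. m l \<in> carrier_mat 2 2 \<and> hermitian (m l)
           \<and> m l + h l * m l * h l \<noteq> 0\<^sub>m 2 2 \<and> m l - h l * m l * h l \<noteq> 0\<^sub>m 2 2"
begin

lemma qbl: "l \<in> {1..p} \<Longrightarrow> qb 2 (h l) (m l)"
  using H M by (unfold_locales) (auto simp: hermitian_def)

lemma qb2l: "l \<in> {1..p} \<Longrightarrow> qb2 (h l) (m l)"
proof -
  assume l: "l \<in> {1..p}"
  interpret q: qb 2 "h l" "m l" by (rule qbl[OF l])
  show ?thesis
  proof
    show "q.a \<noteq> 0\<^sub>m 2 2"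
    proof
      assume "q.a = 0\<^sub>m 2 2"
      then have "2 \<cdot>\<^sub>m q.a = 0\<^sub>m 2 2" by simp
      moreover have "2 \<cdot>\<^sub>m q.a = m l + h l * m l * h l" unfolding q.a_def' by (simp, rule q.m_eqI, auto)
      ultimately have "m l + h l * m l * h l = 0\<^sub>m 2 2" by metis
      moreover have "m l + h l * m l * h l \<noteq> 0\<^sub>m 2 2" using M l by blast
      ultimately show False by blast
    qed
    show "q.b \<noteq> 0\<^sub>m 2 2"
    proof
      assume "q.b = 0\<^sub>m 2 2"
      then have "2 \<cdot>\<^sub>m q.b = 0\<^sub>m 2 2" by simp
      moreover have "2 \<cdot>\<^sub>m q.b = m l - h l * m l * h l" unfolding q.b_def' by (simp, rule q.m_eqI, auto)
      ultimately have "m l - h l * m l * h l = 0\<^sub>m 2 2" by metis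
      moreover have "m l - h l * m l * h l \<noteq> 0\<^sub>m 2 2" using M l by blast
      ultimately show False by blast
    qed
  qed
qed

lemma hc: "l \<in> {1..p} \<Longrightarrow> h l \<in> carrier_mat 2 2" using H by auto
lemma mc: "l \<in> {1..p} \<Longrightarrow> m l \<in> carrier_mat 2 2" using M by auto
lemma fm: "fam2 m p" using M by (auto simp: fam2_def)

definition "U \<theta> = kron_upto (\<lambda>j. uq (h j) (\<theta> j)) p"

lemma U_eq: "qnn_U (2^p) (local_op p h) \<theta> p = U \<theta>"
  unfolding U_def using H by (subst qnn_U_ku) (auto intro!: ku_cong)

lemma dimM: "dim_row (kron_upto m p) = 2^p"
  using ku_carrier[OF fm] by auto

lemma trace_prod:
  assumes f: "fam2 \<sigma> p"
  shows "mtrace (U \<theta> * kron_upto \<sigma> p * adj (U \<theta>) * kron_upto m p) =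
     (\<Prod>j=1..p. mtrace (uq (h j) (\<theta> j) * \<sigma> j * adj (uq (h j) (\<theta> j)) * m j))"
proof -
  let ?u = "\<lambda>j. uq (h j) (\<theta> j)"
  have fu: "fam2 ?u p" using H by (auto simp: fam2_def)
  have fa: "fam2 (\<lambda>j. adj (?u j)) p" using H by (auto simp: fam2_def)
  have f1: "fam2 (\<lambda>j. ?u j * \<sigma> j) p" using H f by (auto simp: fam2_def)
  have f2: "fam2 (\<lambda>j. ?u j * \<sigma> j * adj (?u j)) p" using H f by (auto simp: fam2_def)
  have f3: "fam2 (\<lambda>j. ?u j * \<sigma> j * adj (?u j) * m j) p" using H M f by (auto simp: fam2_def)
  have "U \<theta> * kron_upto \<sigma> p * adj (U \<theta>) * kron_upto m p = kron_upto (\<lambda>j. ?u j * \<sigma> j * adj (?u j) * m j) p"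
    unfolding U_def ku_adj ku_mult[OF fu f] ku_mult[OF f1 fa] ku_mult[OF f2 fm] ..
  then show ?thesis using ku_trace[OF f3] by simp
qed


definition "eps l = (SOME e. e * e = 1 \<and> qb2.ta (h l) (m l) / 2 + e / 2 * qb2.v (h l) (m l) \<noteq> 0)"
definition "kap l = qb2.ta (h l) (m l) / 2 + eps l / 2 * qb2.v (h l) (m l)"

lemma eps: "l \<in> {1..p} \<Longrightarrow> eps l * eps l = 1 \<and> kap l \<noteq> 0"
  unfolding eps_def kap_def by (rule someI_ex, rule qb2.const_nz[OF qb2l])

definition "Pst l = st (qb2.Xe (h l) (eps l))"
definition "S1 l = st (qb2.X1 (h l) (m l))"
definition "S2 l = st (qb2.B' (h l) (m l))"
definition "fam l k = (\<lambda>j. if j = l then (if k = (1::nat) then S1 l else S2 l) else Pst j)"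
definition "rho l k = kron_upto (fam l k) p"
definition "Cl l = (\<Prod>j\<in>{1..p}-{l}. kap j)"
definition "lamL l = qb2.lam (h l) (m l)"
definition "ff l k t = (if k = (1::nat) then qb2.ta (h l) (m l) / 2 + 2/5 * qb2.v (h l) (m l) + 3/5 * lamL l * cos (2 * t)
   else qb2.ta (h l) (m l) / 2 + lamL l * sin (2 * t))"

lemma st_all:
  assumes l: "l \<in> {1..p}" and \<sigma>: "\<sigma> \<in> {S1 l, S2 l, Pst l}"
  shows "\<sigma> \<in> carrier_mat 2 2 \<and> adj \<sigma> = \<sigma> \<and> \<sigma> * adj \<sigma> = \<sigma> \<and> mtrace \<sigma> = 1 \<and> \<sigma> * \<sigma> = \<sigma>"
proof -
  interpret q: qb2 "h l" "m l" by (rule qb2l[OF l])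
  have e: "eps l * eps l = 1" using eps[OF l] by auto
  have x: "q.Xe (eps l) \<in> carrier_mat 2 2" "q.Xe (eps l) * q.Xe (eps l) = 1\<^sub>m 2"
     "adj (q.Xe (eps l)) = q.Xe (eps l)" "mtrace (q.Xe (eps l)) = 0" using q.Xe_props[OF e] by auto
  have "\<sigma> \<in> carrier_mat 2 2 \<and> adj \<sigma> = \<sigma> \<and> \<sigma> * adj \<sigma> = \<sigma> \<and> mtrace \<sigma> = 1"
    using \<sigma> st_props[OF q.X1_props] st_props[OF q.X2_props] st_props[OF x]
    unfolding S1_def S2_def Pst_def by auto
  then show ?thesis by metis
qed

lemma fam_fam2: "l \<in> {1..p} \<Longrightarrow> fam2 (fam l k) p"
  unfolding fam2_def fam_def using st_all by auto

lemma fam_props: "l \<in> {1..p} \<Longrightarrow> j \<in> {1..p} \<Longrightarrow> fam l k j \<in> carrier_mat 2 2 \<and> adj (fam l k j) = fam l k j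
   \<and> fam l k j * adj (fam l k j) = fam l k j \<and> mtrace (fam l k j) = 1"
  unfolding fam_def using st_all by auto

lemma rho_density: assumes l: "l \<in> {1..p}" shows "density_matrix (2^p) (rho l k)"
proof -
  have f: "fam2 (fam l k) p" by (rule fam_fam2[OF l])
  have fa: "fam2 (\<lambda>j. adj (fam l k j)) p" using f by (auto simp: fam2_def)
  have c: "rho l k \<in> carrier_mat (2^p) (2^p)" unfolding rho_def by (rule ku_carrier[OF f])
  have "rho l k * adj (rho l k) = kron_upto (\<lambda>j. fam l k j * adj (fam l k j)) p"
    unfolding rho_def ku_adj ku_mult[OF f fa] ..
  also have "\<dots> = rho l k" unfolding rho_def by (intro ku_cong ballI) (use fam_props[OF l] in blast)
  finally have e: "rho l k * adj (rho l k) = rho l k" .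
  have "psd (rho l k * adj (rho l k))" by (rule psd_mult_adj[OF c])
  then have "psd (rho l k)" unfolding e .
  moreover have "mtrace (rho l k) = 1" unfolding rho_def ku_trace[OF f] using fam_props[OF l] by simp
  ultimately show ?thesis using c by (simp add: density_matrix_def)
qed

lemma Re_trace:
  assumes l: "l \<in> {1..p}" and k: "k \<in> {1,2}"
  shows "Re (mtrace (U \<theta> * rho l k * adj (U \<theta>) * kron_upto m p)) = Cl l * ff l k (\<theta> l)"
proof -
  define g where "g j = (if j = l then ff l k (\<theta> l) else kap j)" for j
  have T: "mtrace (uq (h j) (\<theta> j) * fam l k j * adj (uq (h j) (\<theta> j)) * m j) = complex_of_real (g j)"
    if j: "j \<in> {1..p}" for j
  proof -
    interpret q: qb2 "h j" "m j" by (rule qb2l[OF j])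
    show ?thesis
    proof (cases "j = l")
      case True
      then show ?thesis using k qb2.F1[OF qb2l[OF l], of "\<theta> l"] qb2.F2[OF qb2l[OF l], of "\<theta> l"]
        unfolding fam_def g_def ff_def S1_def S2_def lamL_def by auto
    next
      case False
      then show ?thesis unfolding fam_def g_def Pst_def kap_def
        using q.Fe eps[OF j] by auto
    qed
  qed
  have "mtrace (U \<theta> * rho l k * adj (U \<theta>) * kron_upto m p) = (\<Prod>j=1..p. complex_of_real (g j))"
    unfolding rho_def trace_prod[OF fam_fam2[OF l]] using T by simp
  also have "\<dots> = complex_of_real (\<Prod>j=1..p. g j)" by simp
  also have "(\<Prod>j=1..p. g j) = g l * (\<Prod>j\<in>{1..p}-{l}. g j)"
    using l by (subst prod.remove[of _ l]) auto
  also have "(\<Prod>j\<in>{1..p}-{l}. g j) = Cl l"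
    unfolding Cl_def g_def by (intro prod.cong) auto
  finally show ?thesis by (simp add: g_def)
qed


definition "Wf l0 k0 = kron_upto (\<lambda>j. if j = l0 then (if k0 = (1::nat) then qb2.B (h l0) (m l0) else qb2.B' (h l0) (m l0)) else 1\<^sub>m 2) p"

lemma fval:
  assumes l: "l \<in> {1..p}" and l0: "l0 \<in> {1..p}" and k: "k \<in> {1,2}" and k0: "k0 \<in> {1,2}"
  shows "mtrace (rho l k * Wf l0 k0) = (if l = l0 \<and> k = k0 then (if k0 = 1 then 3/5 else 1) else 0)"
proof -
  define W where "W j = (if j = l0 then (if k0 = (1::nat) then qb2.B (h l0) (m l0) else qb2.B' (h l0) (m l0)) else 1\<^sub>m 2)" for j
  interpret q: qb2 "h l0" "m l0" by (rule qb2l[OF l0])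
  have fW: "fam2 W p" unfolding W_def fam2_def by auto
  have f: "fam2 (fam l k) p" by (rule fam_fam2[OF l])
  have fp: "fam2 (\<lambda>j. fam l k j * W j) p" using f fW by (auto simp: fam2_def)
  have "mtrace (rho l k * Wf l0 k0) = (\<Prod>j=1..p. mtrace (fam l k j * W j))"
    unfolding rho_def Wf_def W_def[symmetric] ku_mult[OF f fW] ku_trace[OF fp] ..
  also have "\<dots> = mtrace (fam l k l0 * W l0) * (\<Prod>j\<in>{1..p}-{l0}. mtrace (fam l k j * W j))"
    using l0 by (subst prod.remove[of _ l0]) auto
  also have "(\<Prod>j\<in>{1..p}-{l0}. mtrace (fam l k j * W j)) = 1"
  proof (intro prod.neutral ballI)
    fix j assume j: "j \<in> {1..p} - {l0}"
    then have "fam l k j * W j = fam l k j" unfolding W_def using fam_props[of l j k] l by auto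
    then show "mtrace (fam l k j * W j) = 1" using fam_props[of l j k] l j by auto
  qed
  also have "mtrace (fam l k l0 * W l0) = (if l = l0 \<and> k = k0 then (if k0 = 1 then 3/5 else 1) else 0)"
    using k k0 q.functionals eps[OF l0] unfolding W_def fam_def S1_def S2_def Pst_def by auto
  finally show ?thesis by simp
qed

lemma rho_inj: "inj_on (\<lambda>(l,k). rho l k) ({1..p} \<times> {1,2})"
proof (rule inj_onI, clarify)
  fix l k l0 k0 assume a: "l \<in> {1..p}" "k \<in> {1,2}" "l0 \<in> {1..p}" "k0 \<in> {1,2}" and e: "rho l k = rho l0 k0"
  have "mtrace (rho l0 k0 * Wf l0 k0) \<noteq> 0" using fval[of l0 l0 k0 k0] a by auto
  then have "mtrace (rho l k * Wf l0 k0) \<noteq> 0" using e by simp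
  then show "l = l0 \<and> k = k0" using fval[of l l0 k k0] a by (auto split: if_splits)
qed

definition "yy l k = (if k = (1::nat) then Cl l * (qb2.ta (h l) (m l) / 2 + 2/5 * qb2.v (h l) (m l)) + 8/15 * Cl l * lamL l
   else Cl l * (qb2.ta (h l) (m l) / 2))"

definition "SS = (\<lambda>(l,k). (rho l k, yy l k)) ` ({1..p} \<times> {1,2})"

lemma SS_inj: "inj_on (\<lambda>(l,k). (rho l k, yy l k)) ({1..p} \<times> {1,2})"
proof (rule inj_onI)
  fix x y assume x: "x \<in> {1..p} \<times> {1::nat,2}" and y: "y \<in> {1..p} \<times> {1::nat,2}"
    and e: "(\<lambda>(l,k). (rho l k, yy l k)) x = (\<lambda>(l,k). (rho l k, yy l k)) y"
  from e have "(\<lambda>(l,k). rho l k) x = (\<lambda>(l,k). rho l k) y" by (simp add: case_prod_beta)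
  then show "x = y" using inj_onD[OF rho_inj _ x y] by simp
qed

lemma card_SS: "card SS = 2 * p"
  unfolding SS_def using SS_inj by (simp add: card_image card_cartesian_product)

lemma dataset_SS: "dataset (2^p) SS"
  unfolding dataset_def SS_def using p1 rho_density by auto

definition "G l t = (Cl l * lamL l * (3/5 * cos (2 * t) - 8/15))\<^sup>2 + (Cl l * lamL l * sin (2 * t))\<^sup>2"

lemma loss_eq: "qnn_loss p (local_op p h) (kron_upto m p) SS \<theta> = (1 / (2 * real p)) * (\<Sum>l=1..p. G l (\<theta> l))"
proof -
  have "qnn_loss p (local_op p h) (kron_upto m p) SS \<theta> =
     (1 / real (card SS)) * (\<Sum>(\<rho>, y)\<in>SS. (Re (mtrace (U \<theta> * \<rho> * adj (U \<theta>) * kron_upto m p)) - y)\<^sup>2)"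
    unfolding qnn_loss_def dimM U_eq by (simp add: Let_def)
  also have "(\<Sum>(\<rho>, y)\<in>SS. (Re (mtrace (U \<theta> * \<rho> * adj (U \<theta>) * kron_upto m p)) - y)\<^sup>2)
     = (\<Sum>(l,k)\<in>{1..p} \<times> {1,2}. (Re (mtrace (U \<theta> * rho l k * adj (U \<theta>) * kron_upto m p)) - yy l k)\<^sup>2)"
    unfolding SS_def by (subst sum.reindex[OF SS_inj]) (simp add: case_prod_beta)
  also have "\<dots> = (\<Sum>(l,k)\<in>{1..p} \<times> {1,2}. (Cl l * ff l k (\<theta> l) - yy l k)\<^sup>2)"
    by (intro sum.cong refl) (auto simp: Re_trace)
  also have "\<dots> = (\<Sum>l=1..p. \<Sum>k\<in>{1,2}. (Cl l * ff l k (\<theta> l) - yy l k)\<^sup>2)"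
    by (rule sum.cartesian_product[symmetric])
  also have "\<dots> = (\<Sum>l=1..p. G l (\<theta> l))"
    by (intro sum.cong refl) (simp add: G_def ff_def yy_def algebra_simps power2_eq_square)
  finally show ?thesis by (simp add: card_SS)
qed


definition "alpha l = Cl l * lamL l"

lemma alpha_nz: "l \<in> {1..p} \<Longrightarrow> alpha l \<noteq> 0"
proof -
  assume l: "l \<in> {1..p}"
  have "Cl l \<noteq> 0" unfolding Cl_def using eps by (subst prod_zero_iff) auto
  moreover have "lamL l > 0" unfolding lamL_def by (rule qb2.lam_pos[OF qb2l[OF l]])
  ultimately show ?thesis by (simp add: alpha_def)
qed

lemma G_form: "G l t = (alpha l)\<^sup>2 * (289/225 - 16/25 * ((cos (2*t))\<^sup>2 + cos (2*t)))"
proof -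
  have s: "(sin (2*t))\<^sup>2 = 1 - (cos (2*t))\<^sup>2" by (simp add: sin_squared_eq)
  show ?thesis unfolding G_def alpha_def power_mult_distrib s by (simp add: algebra_simps power2_eq_square)
qed

lemma G_ge0: "G l t \<ge> G l 0"
proof -
  have x: "-1 \<le> cos (2*t)" "cos (2*t) \<le> 1" by auto
  have "0 \<le> (1 - cos (2*t)) * (2 + cos (2*t))" by (rule mult_nonneg_nonneg; insert x; linarith)
  then have "(cos (2*t))\<^sup>2 + cos (2*t) \<le> 2" by (simp add: algebra_simps power2_eq_square)
  then have "289/225 - 16/25 * 2 \<le> 289/225 - 16/25 * ((cos (2*t))\<^sup>2 + cos (2*t))" by simp
  then show ?thesis unfolding G_form by (intro mult_left_mono) auto
qed

lemma G_ge_half: "cos (2*t) \<le> 0 \<Longrightarrow> G l t \<ge> G l (pi/2)"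
proof -
  assume c: "cos (2*t) \<le> 0"
  have x: "-1 \<le> cos (2*t)" by auto
  have "0 \<le> (- cos (2*t)) * (1 + cos (2*t))" by (rule mult_nonneg_nonneg; insert x c; linarith)
  then have "(cos (2*t))\<^sup>2 + cos (2*t) \<le> 0" by (simp add: algebra_simps power2_eq_square)
  then have "289/225 - 16/25 * 0 \<le> 289/225 - 16/25 * ((cos (2*t))\<^sup>2 + cos (2*t))" by simp
  then show ?thesis unfolding G_form by (intro mult_left_mono) auto
qed

lemma G_gt: "l \<in> {1..p} \<Longrightarrow> G l (pi/2) > G l 0"
  unfolding G_form using alpha_nz by simp

lemma G_nonneg: "G l t \<ge> 0"
  unfolding G_def by simp

lemma cos_neg_near: "\<bar>t - pi/2\<bar> < pi/4 \<Longrightarrow> cos (2*t) \<le> 0"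
proof -
  assume a: "\<bar>t - pi/2\<bar> < pi/4"
  define s where "s = 2*t - pi"
  have b1: "t - pi/2 < pi/4 \<and> -(t - pi/2) < pi/4" using a by (simp only: abs_less_iff)
  have "-(pi/2) \<le> s" "s \<le> pi/2" using b1 unfolding s_def by linarith+
  then have "0 \<le> cos s" by (rule cos_ge_zero)
  moreover have "cos (2*t) = - cos s" unfolding s_def by (metis cos_periodic_pi diff_add_cancel)
  ultimately show ?thesis by simp
qed

definition "thA A = (\<lambda>l. if l \<in> A then pi/2 else (0::real))"

abbreviation "LL \<equiv> qnn_loss p (local_op p h) (kron_upto m p) SS"

lemma LL_nonneg: "LL \<theta> \<ge> 0"
  unfolding loss_eq by (intro mult_nonneg_nonneg sum_nonneg G_nonneg) auto

lemma local_min_thA: "local_min_param p LL (thA A)"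
  unfolding local_min_param_def
proof (intro exI[of _ "pi/4"] conjI allI impI)
  show "pi/4 > 0" by simp
  fix \<theta>' assume n: "\<forall>l\<in>{1..p}. \<bar>\<theta>' l - thA A l\<bar> < pi/4"
  have "G l (thA A l) \<le> G l (\<theta>' l)" if l: "l \<in> {1..p}" for l
  proof (cases "l \<in> A")
    case True
    have "\<bar>\<theta>' l - thA A l\<bar> < pi/4" using n l by blast
    then have "\<bar>\<theta>' l - pi/2\<bar> < pi/4" using True by (simp add: thA_def)
    then show ?thesis using True G_ge_half cos_neg_near by (auto simp: thA_def)
  next
    case False then show ?thesis using G_ge0 by (auto simp: thA_def)
  qed
  then have "(\<Sum>l=1..p. G l (thA A l)) \<le> (\<Sum>l=1..p. G l (\<theta>' l))" by (intro sum_mono) auto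
  then show "LL (thA A) \<le> LL \<theta>'" unfolding loss_eq by (intro mult_left_mono) auto
qed

lemma spurious_thA:
  assumes A: "A \<subseteq> {1..p}" "A \<noteq> {}"
  shows "spurious_local_min p LL (thA A)"
  unfolding spurious_local_min_def
proof (intro conjI local_min_thA)
  obtain l0 where l0: "l0 \<in> A" using A by auto
  have bdd: "bdd_below (range LL)" using LL_nonneg by (intro bdd_belowI[of _ 0]) auto
  have "(INF \<theta>'. LL \<theta>') \<le> LL (thA {})" by (rule cINF_lower[OF bdd]) simp
  also have "LL (thA {}) < LL (thA A)"
  proof -
    have "(\<Sum>l=1..p. G l (thA {} l)) < (\<Sum>l=1..p. G l (thA A l))"
    proof (rule sum_strict_mono_ex1)
      show "\<forall>l\<in>{1..p}. G l (thA {} l) \<le> G l (thA A l)"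
        using G_ge0 by (auto simp: thA_def)
      show "\<exists>l\<in>{1..p}. G l (thA {} l) < G l (thA A l)"
        using l0 A G_gt by (intro bexI[of _ l0]) (auto simp: thA_def)
    qed auto
    moreover have "real p > 0" using p1 by simp
    ultimately show ?thesis unfolding loss_eq by (intro mult_strict_left_mono) auto
  qed
  finally show "LL (thA A) > (INF \<theta>'. LL \<theta>')" .
qed

lemma thA_inj: "inj_on thA (Pow {1..p})"
proof (rule inj_onI)
  fix A B assume "A \<in> Pow {1..p}" "B \<in> Pow {1..p}" and e: "thA A = thA B"
  have "A = {l. thA A l \<noteq> 0}" "B = {l. thA B l \<noteq> 0}" by (auto simp: thA_def)
  then show "A = B" using e by metis
qed

lemma main2:
  "\<exists>S. dataset (2 ^ p) S \<and>
          (\<exists>T. T \<subseteq> period_box p \<and> card T = 2 ^ p - 1 \<and>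
               (\<forall>\<theta>\<in>T. spurious_local_min p (qnn_loss p (local_op p h) (kron_upto m p) S) \<theta>))"
proof (intro exI conjI)
  show "dataset (2^p) SS" by (rule dataset_SS)
  let ?T = "thA ` (Pow {1..p} - {{}})"
  show "?T \<subseteq> period_box p" by (auto simp: period_box_def thA_def)
  have "card ?T = card (Pow {1..p} - {{}})"
    using thA_inj by (intro card_image) (auto intro: inj_on_subset)
  also have "\<dots> = 2^p - 1" by (simp add: card_Diff_singleton card_Pow)
  finally show "card ?T = 2^p - 1" .
  show "\<forall>\<theta>\<in>?T. spurious_local_min p LL \<theta>"
    using spurious_thA by auto
qed

end

theorem proposition1:
  fixes p :: nat and h m :: "nat \<Rightarrow> complex mat"
  assumes "p \<ge> 1"
    and "\<forall>l\<in>{1..p}. h l \<in> carrier_mat 2 2 \<and> hermitian (h l) \<and> h l * h l = 1\<^sub>m 2"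
    and "\<forall>l\<in>{1..p}. m l \<in> carrier_mat 2 2 \<and> hermitian (m l)
           \<and> m l + h l * m l * h l \<noteq> 0\<^sub>m 2 2 \<and> m l - h l * m l * h l \<noteq> 0\<^sub>m 2 2"
  shows "with_linear_independence p (local_op p h) (kron_upto m p)
    \<and> (\<exists>S. dataset (2 ^ p) S \<and>
          (\<exists>T. T \<subseteq> period_box p \<and> card T = 2 ^ p - 1 \<and>
               (\<forall>\<theta>\<in>T. spurious_local_min p (qnn_loss p (local_op p h) (kron_upto m p) S) \<theta>)))"
  proof -
  interpret P2 p h m using assms by unfold_locales auto
  show ?thesis using part1[OF assms(2,3)] main2 by auto
qed

end
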